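(* For the SVIQR system, if $R_0>1$ then the unique endemic equilibrium $E^*=(S_k^*,V_k^*,I_k^*,Q_k^*,R_k^* )_{k=1}^n$ (the unique equilibrium with nonnegative components and $\Theta>0$) is globally asymptotically stable: it is Lyapunov stable, and every solution whose initial data satisfy $S_k(0),V_k(0),I_k(0),Q_k(0),R_k(0)>0$ and $S_k(0)+V_k(0)+I_k(0)+Q_k(0)+R_k(0)=N_k^*$ for all $k$ converges to $E^*$ as $t\to\infty$.
   Context: Fix an integer $n\ge1$ and numbers $p(1),\dots,p(n)>0$ with $\sum_{k=1}^n p(k)=1$; set $\langle k\rangle=\sum_{k=1}^n kp(k)$. Fix constants $b>d>0$ and let $\Phi^*>0$ satisfy $\Phi^*=\frac{1}{\langle k\rangle}\sum_{i=1}^n \frac{i\,p(i)\,b\Phi^*}{d+bi\Phi^*}$. For $k=1,\dots,n$ put $N_k^*=\frac{bk\Phi^*}{d+bk\Phi^*}\in(0,1)$ and $\Lambda_k=bk(1-N_k^* )\Phi^*$ (so $\Lambda_k=dN_k^*>0$). Parameters: $\lambda(k)>0$, $\varphi(k)>0$, $\mu_k>0$ for $k=1,\dots,n$; constants $\alpha,\beta,\gamma,\eta,\omega>0$ and $\delta\in[0,1]$. For functions $I_1(t),\dots,I_n(t)$ set $\Theta(t)=\frac{1}{\langle k\rangle}\sum_{i=1}^n\varphi(i)p(i)I_i(t)$. The SVIQR system is, for $k=1,\dots,n$: $S_k'=\Lambda_k-\lambda(k)S_k\Theta+\omega V_k-(\mu_k+d)S_k$, $V_k'=\mu_kS_k-\delta\lambda(k)V_k\Theta-(d+\omega+\alpha)V_k$,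 $I_k'=\lambda(k)S_k\Theta+\delta\lambda(k)V_k\Theta-(\gamma+\beta+d)I_k$, $Q_k'=\beta I_k-(\eta+d)Q_k$, $R_k'=\gamma I_k+\eta Q_k+\alpha V_k-dR_k$. Its basic reproduction number is $R_0=\frac{1}{\langle k\rangle}\sum_{k=1}^n\varphi(k)p(k)\lambda(k)\frac{\Lambda_k(d+\omega+\alpha+\delta\mu_k)}{(\gamma+\beta+d)[(d+\alpha+\omega)d+(d+\alpha)\mu_k]}$. When $R_0>1$ the system has exactly one equilibrium with nonnegative components and $\Theta>0$ (endemic equilibrium), denoted $E^*$. *)

theory Defs
  imports "HOL-Analysis.Analysis"
begin

text \<open>Network SVIQR model. Degree classes are indexed by k in {1..n};
states are functions nat => real (only the values at k in {1..n} matter).\<close>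

definition avgdeg :: "nat \<Rightarrow> (nat \<Rightarrow> real) \<Rightarrow> real" where
  "avgdeg n p = (\<Sum>k=1..n. real k * p k)"

definition Nstar :: "real \<Rightarrow> real \<Rightarrow> real \<Rightarrow> nat \<Rightarrow> real" where
  "Nstar b d Phi k = b * real k * Phi / (d + b * real k * Phi)"

definition Lam :: "real \<Rightarrow> real \<Rightarrow> real \<Rightarrow> nat \<Rightarrow> real" where
  "Lam b d Phi k = b * real k * (1 - Nstar b d Phi k) * Phi"

definition Theta :: "nat \<Rightarrow> (nat \<Rightarrow> real) \<Rightarrow> (nat \<Rightarrow> real) \<Rightarrow> (nat \<Rightarrow> real) \<Rightarrow> real" where
  "Theta n p phi I = (1 / avgdeg n p) * (\<Sum>i=1..n. phi i * p i * I i)"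

definition R0 where
  "R0 n p lam phi mu b d Phi alpha beta gamma omega delta =
     (1 / avgdeg n p) * (\<Sum>k=1..n. phi k * p k * lam k *
        (Lam b d Phi k * (d + omega + alpha + delta * mu k)) /
        ((gamma + beta + d) * ((d + alpha + omega) * d + (d + alpha) * mu k)))"

definition rhsS where
  "rhsS n p lam phi mu b d Phi omega S V I k =
     Lam b d Phi k - lam k * S k * Theta n p phi I + omega * V k - (mu k + d) * S k"

definition rhsV where
  "rhsV n p lam phi mu d alpha omega delta S V I k =
     mu k * S k - delta * lam k * V k * Theta n p phi I - (d + omega + alpha) * V k"

definition rhsI where
  "rhsI n p lam phi d beta gamma delta S V I k =
     lam k * S k * Theta n p phi I + delta * lam k * V k * Theta n p phi I
       - (gamma + beta + d) * I k"

definition rhsQ where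
  "rhsQ d beta eta I Q k = beta * I k - (eta + d) * Q k"

definition rhsR where
  "rhsR d alpha gamma eta V I Q R k = gamma * I k + eta * Q k + alpha * V k - d * R k"

definition is_solution where
  "is_solution n p lam phi mu b d Phi alpha beta gamma eta omega delta
      (S :: real \<Rightarrow> nat \<Rightarrow> real) V I Q R \<longleftrightarrow>
   (\<forall>t\<ge>0. \<forall>k\<in>{1..n}.
      ((\<lambda>\<tau>. S \<tau> k) has_real_derivative
          rhsS n p lam phi mu b d Phi omega (S t) (V t) (I t) k) (at t within {0..}) \<and>
      ((\<lambda>\<tau>. V \<tau> k) has_real_derivative
          rhsV n p lam phi mu d alpha omega delta (S t) (V t) (I t) k) (at t within {0..}) \<and>
      ((\<lambda>\<tau>. I \<tau> k) has_real_derivative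
          rhsI n p lam phi d beta gamma delta (S t) (V t) (I t) k) (at t within {0..}) \<and>
      ((\<lambda>\<tau>. Q \<tau> k) has_real_derivative
          rhsQ d beta eta (I t) (Q t) k) (at t within {0..}) \<and>
      ((\<lambda>\<tau>. R \<tau> k) has_real_derivative
          rhsR d alpha gamma eta (V t) (I t) (Q t) (R t) k) (at t within {0..}))"

definition is_endemic_equilibrium where
  "is_endemic_equilibrium n p lam phi mu b d Phi alpha beta gamma eta omega delta
      (Se :: nat \<Rightarrow> real) Ve Ie Qe Rst \<longleftrightarrow>
   (\<forall>k\<in>{1..n}.
      rhsS n p lam phi mu b d Phi omega Se Ve Ie k = 0 \<and>
      rhsV n p lam phi mu d alpha omega delta Se Ve Ie k = 0 \<and>
      rhsI n p lam phi d beta gamma delta Se Ve Ie k = 0 \<and>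
      rhsQ d beta eta Ie Qe k = 0 \<and>
      rhsR d alpha gamma eta Ve Ie Qe Rst k = 0 \<and>
      Se k \<ge> 0 \<and> Ve k \<ge> 0 \<and> Ie k \<ge> 0 \<and> Qe k \<ge> 0 \<and> Rst k \<ge> 0) \<and>
   Theta n p phi Ie > 0"

definition sdist where
  "sdist n (S :: nat \<Rightarrow> real) V I Q R S' V' I' Q' R' =
     (\<Sum>k=1..n. \<bar>S k - S' k\<bar> + \<bar>V k - V' k\<bar> + \<bar>I k - I' k\<bar> + \<bar>Q k - Q' k\<bar> + \<bar>R k - R' k\<bar>)"

definition admissible_init where
  "admissible_init n b d Phi (S0 :: nat \<Rightarrow> real) V0 I0 Q0 R0i \<longleftrightarrow>
   (\<forall>k\<in>{1..n}. S0 k > 0 \<and> V0 k > 0 \<and> I0 k > 0 \<and> Q0 k > 0 \<and> R0i k > 0 \<and>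
      S0 k + V0 k + I0 k + Q0 k + R0i k = Nstar b d Phi k)"

end

theory Submission
  imports Defs "HOL-Real_Asymp.Real_Asymp"
begin

lemma ln_trick2: "(x::real)>0 \<Longrightarrow> y>0 \<Longrightarrow> (1 - x) + (1 - y) \<le> - ln (x*y)"
  using ln_le_minus_one[of x] ln_le_minus_one[of y] by (simp add: ln_mult)

lemma ln_trick3: "(x::real)>0 \<Longrightarrow> y>0 \<Longrightarrow> w>0 \<Longrightarrow> (1 - x) + (1 - y) + (1-w) \<le> - ln (x*y*w)"
  using ln_le_minus_one[of x] ln_le_minus_one[of y] ln_le_minus_one[of w] by (simp add: ln_mult)

lemma class_identity:
  fixes S V I th Sa Va Ia tha lam mu Lam d ww al de D :: real
  assumes pos: "S>0" "V>0" "I>0" "th>0" "Sa>0" "Va>0" "Ia>0" "tha>0"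
    and E1: "Lam - lam*Sa*tha + ww*Va - (mu+d)*Sa = 0"
    and E2: "mu*Sa - de*lam*Va*tha - (d+ww+al)*Va = 0"
    and E3: "lam*Sa*tha + de*lam*Va*tha - D*Ia = 0"
  shows "(1-Sa/S)*(Lam - lam*S*th + ww*V - (mu+d)*S) + (1-Va/V)*(mu*S - de*lam*V*th - (d+ww+al)*V)
       + (1-Ia/I)*(lam*S*th + de*lam*V*th - D*I)
     = d*Sa*(2-S/Sa-Sa/S) + (d+al)*Va*(3-Sa/S-V/Va-(S/Sa)/(V/Va)) + ww*Va*(2-(V/Va)/(S/Sa)-(S/Sa)/(V/Va))
       + (lam*Sa*tha)*(2-Sa/S+th/tha-(S/Sa)*(th/tha)/(I/Ia)-I/Ia)
       + (de*lam*Va*tha)*(3-Sa/S-(S/Sa)/(V/Va)+th/tha-(V/Va)*(th/tha)/(I/Ia)-I/Ia)"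
proof -
  have L: "Lam = lam*Sa*tha - ww*Va + (mu+d)*Sa" using E1 by simp
  have M: "mu = (de*lam*Va*tha + (d+ww+al)*Va)/Sa" using E2 pos by (simp add: field_simps)
  have DD: "D = (lam*Sa*tha + de*lam*Va*tha)/Ia" using E3 pos by (simp add: field_simps)
  show ?thesis unfolding L DD M using pos by (simp add: field_simps)
qed

lemma class_ineq:
  fixes S V I th Sa Va Ia tha lam mu Lam d ww al de D :: real
  assumes pos: "S>0" "V>0" "I>0" "th>0" "Sa>0" "Va>0" "Ia>0" "tha>0"
    and pp: "lam>0" "d>0" "ww>0" "al>0" "de\<ge>0" and le1: "S\<le>1" "V\<le>1"
    and E1: "Lam - lam*Sa*tha + ww*Va - (mu+d)*Sa = 0"
    and E2: "mu*Sa - de*lam*Va*tha - (d+ww+al)*Va = 0"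
    and E3: "lam*Sa*tha + de*lam*Va*tha - D*Ia = 0"
  shows "(1-Sa/S)*(Lam - lam*S*th + ww*V - (mu+d)*S) + (1-Va/V)*(mu*S - de*lam*V*th - (d+ww+al)*V)
       + (1-Ia/I)*(lam*S*th + de*lam*V*th - D*I)
     \<le> -(d*(S-Sa)^2 + (ww/Sa)*(S*Va-V*Sa)^2) + D*Ia*(th/tha - I/Ia + (I/Ia)*(tha/th) - 1)"
proof -
  define x y z u where "x = S/Sa" "y = V/Va" "z = I/Ia" "u = th/tha"
  have xp: "x>0" "y>0" "z>0" "u>0" using pos by (auto simp: x_y_z_u_def)
  define a e where "a = lam*Sa*tha" "e = de*lam*Va*tha"
  have ap: "a>0" "e\<ge>0" using pos pp by (auto simp: a_e_def)
  have aeD: "a + e = D*Ia" using E3 by (simp add: a_e_def)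
  have id: "(1-Sa/S)*(Lam - lam*S*th + ww*V - (mu+d)*S) + (1-Va/V)*(mu*S - de*lam*V*th - (d+ww+al)*V)
       + (1-Ia/I)*(lam*S*th + de*lam*V*th - D*I)
     = d*Sa*(2-x-1/x) + (d+al)*Va*(3-1/x-y-x/y) + ww*Va*(2-y/x-x/y)
       + a*(2-1/x+u-x*u/z-z) + e*(3-1/x-x/y+u-y*u/z-z)"
    unfolding class_identity[OF pos E1 E2 E3] x_y_z_u_def a_e_def using pos by (simp add: field_simps)
  have t1: "d*Sa*(2-x-1/x) \<le> -d*(S-Sa)^2"
  proof -
    have "d*Sa*(2-x-1/x) = -d*(S-Sa)^2/S" unfolding x_y_z_u_def using pos by (simp add: field_simps power2_eq_square)
    also have "\<dots> \<le> -d*(S-Sa)^2"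
    proof -
      have "d*(S-Sa)^2 \<le> d*(S-Sa)^2/S" using pos le1 pp
        by (simp add: le_divide_eq mult_left_le)
      thus ?thesis by simp
    qed
    finally show ?thesis .
  qed
  have t2: "(d+al)*Va*(3-1/x-y-x/y) \<le> 0"
  proof -
    have "(1-1/x)+(1-y)+(1-x/y) \<le> - ln (1/x*y*(x/y))" using xp by (intro ln_trick3) auto
    also have "1/x*y*(x/y) = 1" using xp by simp
    finally have "3-1/x-y-x/y \<le> 0" by simp
    thus ?thesis using pos pp by (simp add: mult_nonneg_nonpos)
  qed
  have t3: "ww*Va*(2-y/x-x/y) \<le> -(ww/Sa)*(S*Va-V*Sa)^2"
  proof -
    have "ww*Va*(2-y/x-x/y) = -(ww/Sa)*(S*Va-V*Sa)^2/(S*V)" unfolding x_y_z_u_def using pos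
      by (simp add: field_simps power2_eq_square)
    also have "\<dots> \<le> -(ww/Sa)*(S*Va-V*Sa)^2"
    proof -
      have "S*V \<le> 1" using le1 pos by (simp add: mult_le_one)
      hence "(ww/Sa)*(S*Va-V*Sa)^2 \<le> (ww/Sa)*(S*Va-V*Sa)^2/(S*V)" using pos pp
        by (simp add: le_divide_eq mult_left_le)
      thus ?thesis by simp
    qed
    finally show ?thesis .
  qed
  have t4: "2-1/x-x*u/z \<le> z/u - 1"
  proof -
    have "(1-1/x)+(1-x*u/z) \<le> - ln (1/x*(x*u/z))" using xp by (intro ln_trick2) auto
    also have "- ln (1/x*(x*u/z)) = ln (z/u)" using xp by (simp add: ln_div)
    also have "\<dots> \<le> z/u - 1" using xp by (intro ln_le_minus_one) auto
    finally show ?thesis by simp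
  qed
  have t5: "3-1/x-x/y-y*u/z \<le> z/u - 1"
  proof -
    have "(1-1/x)+(1-x/y)+(1-y*u/z) \<le> - ln (1/x*(x/y)*(y*u/z))" using xp by (intro ln_trick3) auto
    also have "- ln (1/x*(x/y)*(y*u/z)) = ln (z/u)" using xp by (simp add: ln_div)
    also have "\<dots> \<le> z/u - 1" using xp by (intro ln_le_minus_one) auto
    finally show ?thesis by simp
  qed
  have "a*(2-1/x+u-x*u/z-z) + e*(3-1/x-x/y+u-y*u/z-z) \<le> a*(z/u-1+u-z) + e*(z/u-1+u-z)"
    using t4 t5 ap by (intro add_mono mult_left_mono) auto
  also have "\<dots> = D*Ia*(th/tha - I/Ia + (I/Ia)*(tha/th) - 1)"
    unfolding aeD[symmetric] x_y_z_u_def by (simp add: algebra_simps add_divide_distrib)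
  finally have t45: "a*(2-1/x+u-x*u/z-z) + e*(3-1/x-x/y+u-y*u/z-z) \<le> D*Ia*(th/tha - I/Ia + (I/Ia)*(tha/th) - 1)" .
  show ?thesis unfolding id using t1 t2 t3 t45 by linarith
qed



lemma at0_interior: "(x::real) > 0 \<Longrightarrow> at x within {0..} = at x"
  by (rule at_within_interior) simp

lemma cont_from_deriv:
  assumes "\<And>x. s \<le> x \<Longrightarrow> x \<le> t \<Longrightarrow> (f has_real_derivative f' x) (at x within {0..})" "0 \<le> s"
  shows "continuous_on {s..t} f"
proof -
  have "continuous (at x within {s..t}) f" if "x\<in>{s..t}" for x
  proof -
    have "(f has_real_derivative f' x) (at x within {s..t})"
      using assms that by (intro DERIV_subset[OF assms(1)]) auto
    thus ?thesis by (rule DERIV_continuous)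
  qed
  thus ?thesis using continuous_on_eq_continuous_within by blast
qed

lemma deriv_mono:
  fixes f f' :: "real \<Rightarrow> real"
  assumes "0 \<le> s" "s \<le> t"
   and d: "\<And>x. s \<le> x \<Longrightarrow> x \<le> t \<Longrightarrow> (f has_real_derivative f' x) (at x within {0..})"
   and n: "\<And>x. s < x \<Longrightarrow> x < t \<Longrightarrow> f' x \<ge> 0"
  shows "f s \<le> f t"
proof (rule DERIV_nonneg_imp_increasing_open[OF assms(2)])
  fix x assume x: "s < x" "x < t"
  have "(f has_real_derivative f' x) (at x)"
    using d[of x] x assms(1) by (simp add: at0_interior)
  then show "\<exists>y. DERIV f x :> y \<and> y \<ge> 0" using n[OF x] by blast
next
  show "continuous_on {s..t} f" using cont_from_deriv[of s t f f'] d assms(1) by auto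
qed

lemma deriv_antimono:
  fixes f f' :: "real \<Rightarrow> real"
  assumes "0 \<le> s" "s \<le> t"
   and d: "\<And>x. s \<le> x \<Longrightarrow> x \<le> t \<Longrightarrow> (f has_real_derivative f' x) (at x within {0..})"
   and n: "\<And>x. s < x \<Longrightarrow> x < t \<Longrightarrow> f' x \<le> 0"
  shows "f t \<le> f s"
proof -
  have "- f s \<le> - f t"
    by (rule deriv_mono[of s t "\<lambda>x. - f x" "\<lambda>x. - f' x"]) (use assms in \<open>auto intro!: derivative_eq_intros\<close>)
  thus ?thesis by simp
qed

lemma mvt0:
  fixes f f' :: "real \<Rightarrow> real"
  assumes "0 < a" "a < b" "\<And>x. a \<le> x \<Longrightarrow> x \<le> b \<Longrightarrow> (f has_real_derivative f' x) (at x within {0..})"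
  shows "\<exists>\<xi>. a < \<xi> \<and> \<xi> < b \<and> f b - f a = (b - a) * f' \<xi>"
proof (rule MVT2[OF assms(2)])
  fix x assume "a \<le> x" "x \<le> b"
  thus "DERIV f x :> f' x" using assms(3)[of x] assms(1) by (simp add: at0_interior)
qed

lemma lin_upper:
  fixes g g' e :: "real \<Rightarrow> real"
  assumes m: "m > 0" and T: "0 \<le> T" "T \<le> t"
   and d: "\<And>x. T \<le> x \<Longrightarrow> (g has_real_derivative g' x) (at x within {0..})"
   and eq: "\<And>x. T \<le> x \<Longrightarrow> g' x = -m * g x + e x"
   and eb: "\<And>x. T \<le> x \<Longrightarrow> e x \<le> E"
  shows "g t \<le> E/m + (g T - E/m) * exp (-m*(t-T))"
proof -
  define h where "h x = (g x - E/m) * exp (m*x)" for x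
  have "h t \<le> h T"
  proof (rule deriv_antimono[OF T, where f' = "\<lambda>x. (e x - E) * exp (m*x)"])
    fix x assume x: "T \<le> x" "x \<le> t"
    have "(h has_real_derivative (g' x * exp (m*x) + (g x - E/m) * (exp (m*x) * m))) (at x within {0..})"
      unfolding h_def by (rule derivative_eq_intros d[OF x(1)] refl)+ simp
    moreover have "g' x * exp (m*x) + (g x - E/m) * (exp (m*x) * m) = (g' x + m * g x - E) * exp (m*x)"
      using m by (simp add: field_simps)
    moreover have "g' x + m * g x - E = e x - E" using eq[OF x(1)] by simp
    ultimately show "(h has_real_derivative (e x - E) * exp (m*x)) (at x within {0..})" by simp
  next
    fix x assume x: "T < x" "x < t"
    show "(e x - E) * exp (m*x) \<le> 0" using eb[of x] x by (simp add: mult_nonpos_nonneg)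
  qed
  hence "(g t - E/m) * exp (m*t) \<le> (g T - E/m) * exp (m*T)" by (simp add: h_def)
  hence "g t - E/m \<le> (g T - E/m) * (exp (m*T) / exp (m*t))" by (simp add: le_divide_eq)
  also have "exp (m*T) / exp (m*t) = exp (-m*(t-T))" by (simp add: exp_diff[symmetric] algebra_simps)
  finally show ?thesis by simp
qed

lemma lin_bound:
  fixes g g' e :: "real \<Rightarrow> real"
  assumes m: "m > 0" and t: "0 \<le> t"
   and d: "\<And>x. 0 \<le> x \<Longrightarrow> (g has_real_derivative g' x) (at x within {0..})"
   and eq: "\<And>x. 0 \<le> x \<Longrightarrow> g' x = -m * g x + e x"
   and eb: "\<And>x. 0 \<le> x \<Longrightarrow> \<bar>e x\<bar> \<le> E"
  shows "\<bar>g t\<bar> \<le> \<bar>g 0\<bar> + E/m"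
proof -
  have E: "E \<ge> 0" using eb[of 0] by simp
  have ex: "exp (-m*(t-0)) \<le> 1" "exp (-m*(t-0)) \<ge> 0" using m t by auto
  have u: "g t \<le> E/m + (g 0 - E/m) * exp (-m*(t-0))"
    by (rule lin_upper[OF m order.refl t d eq]) (use eb in \<open>auto simp: abs_le_iff\<close>)
  have l: "- g t \<le> E/m + (- g 0 - E/m) * exp (-m*(t-0))"
    by (rule lin_upper[OF m order.refl t, where g' = "\<lambda>x. - g' x" and e = "\<lambda>x. - e x"])
       (use d eq eb in \<open>auto intro!: derivative_eq_intros simp: abs_le_iff\<close>)
  have a1: "(g 0 - E/m) * exp (-m*(t-0)) \<le> \<bar>g 0\<bar>"
  proof (cases "g 0 - E/m \<ge> 0")
    case True
    hence "(g 0 - E/m) * exp (-m*(t-0)) \<le> (g 0 - E/m)" using ex mult_left_le[of "exp (-m*(t-0))" "g 0 - E/m"] by simp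
    moreover have "E/m \<ge> 0" using E m by simp
    moreover have "g 0 \<le> \<bar>g 0\<bar>" by simp
    ultimately show ?thesis by linarith
  next
    case False thus ?thesis using ex by (smt (verit) mult_nonpos_nonneg)
  qed
  have a2: "(- g 0 - E/m) * exp (-m*(t-0)) \<le> \<bar>g 0\<bar>"
  proof (cases "- g 0 - E/m \<ge> 0")
    case True
    hence "(- g 0 - E/m) * exp (-m*(t-0)) \<le> (- g 0 - E/m)" using ex mult_left_le[of "exp (-m*(t-0))" "- g 0 - E/m"] by simp
    moreover have "E/m \<ge> 0" using E m by simp
    moreover have "- g 0 \<le> \<bar>g 0\<bar>" by simp
    ultimately show ?thesis by linarith
  next
    case False thus ?thesis using ex by (smt (verit) mult_nonpos_nonneg)
  qed
  show ?thesis using u l a1 a2 by linarith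
qed

lemma lin_conv:
  fixes g g' e :: "real \<Rightarrow> real"
  assumes m: "m > 0"
   and d: "\<And>x. 0 \<le> x \<Longrightarrow> (g has_real_derivative g' x) (at x within {0..})"
   and eq: "\<And>x. 0 \<le> x \<Longrightarrow> g' x = -m * g x + e x"
   and e0: "(e \<longlongrightarrow> 0) at_top"
  shows "(g \<longlongrightarrow> 0) at_top"
  unfolding tendsto_iff
proof (intro allI impI)
  fix \<epsilon> :: real assume \<epsilon>: "\<epsilon> > 0"
  have "eventually (\<lambda>x. dist (e x) 0 < m*\<epsilon>/2) at_top" using \<epsilon> m by (intro tendstoD[OF e0]) simp
  then obtain T1 where T1: "\<And>x. x \<ge> T1 \<Longrightarrow> \<bar>e x\<bar> < m*\<epsilon>/2" by (auto simp: eventually_at_top_linorder)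
  define T where "T = max T1 0"
  define B where "B = \<bar>g T\<bar>"
  have "((\<lambda>t. B * exp (-m*(t-T))) \<longlongrightarrow> 0) at_top" using m by real_asymp
  hence "eventually (\<lambda>t. dist (B * exp (-m*(t-T))) 0 < \<epsilon>/2) at_top" using \<epsilon> by (intro tendstoD) simp_all
  then obtain T2 where T2: "\<And>t. t \<ge> T2 \<Longrightarrow> \<bar>B * exp (-m*(t-T))\<bar> < \<epsilon>/2" by (auto simp: eventually_at_top_linorder)
  show "eventually (\<lambda>t. dist (g t) 0 < \<epsilon>) at_top" unfolding eventually_at_top_linorder
  proof (intro exI[of _ "max T T2"] allI impI)
    fix t assume t: "max T T2 \<le> t"
    have T0: "0 \<le> T" "T \<le> t" using t by (auto simp: T_def)
    have ex: "exp (-m*(t-T)) \<ge> 0" by simp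
    have ebu: "e x \<le> m*\<epsilon>/2" if "T \<le> x" for x
    proof -
      have "x \<ge> T1" using that by (simp add: T_def)
      hence "\<bar>e x\<bar> < m*\<epsilon>/2" by (rule T1)
      thus ?thesis by simp
    qed
    have ebl: "- e x \<le> m*\<epsilon>/2" if "T \<le> x" for x
    proof -
      have "x \<ge> T1" using that by (simp add: T_def)
      hence "\<bar>e x\<bar> < m*\<epsilon>/2" by (rule T1)
      thus ?thesis by simp
    qed
    have d1: "(g has_real_derivative g' x) (at x within {0..})" if "T \<le> x" for x
      using d[of x] that T0 by simp
    have d2: "((\<lambda>x. - g x) has_real_derivative - g' x) (at x within {0..})" if "T \<le> x" for x
      using DERIV_minus[OF d1[OF that]] .
    have eq2: "- g' x = -m * (- g x) + (- e x)" if "T \<le> x" for x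
      using eq[of x] that T0 by simp
    have eq1: "g' x = -m * g x + e x" if "T \<le> x" for x
      using eq[of x] that T0 by simp
    have u: "g t \<le> (m*\<epsilon>/2)/m + (g T - (m*\<epsilon>/2)/m) * exp (-m*(t-T))"
      by (rule lin_upper[OF m T0 d1 eq1 ebu])
    have l: "- g t \<le> (m*\<epsilon>/2)/m + (- g T - (m*\<epsilon>/2)/m) * exp (-m*(t-T))"
      by (rule lin_upper[OF m T0 d2 eq2 ebl])
    have bb: "B * exp (-m*(t-T)) < \<epsilon>/2" using T2[of t] t by auto
    have "(g T - (m*\<epsilon>/2)/m) * exp (-m*(t-T)) \<le> B * exp (-m*(t-T))"
      using ex \<epsilon> m unfolding B_def by (intro mult_right_mono) auto
    moreover have "(- g T - (m*\<epsilon>/2)/m) * exp (-m*(t-T)) \<le> B * exp (-m*(t-T))"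
      using ex \<epsilon> m unfolding B_def by (intro mult_right_mono) auto
    moreover have "(m*\<epsilon>/2)/m = \<epsilon>/2" using m by simp
    ultimately have "g t < \<epsilon>" "- g t < \<epsilon>" using u l bb by linarith+
    thus "dist (g t) 0 < \<epsilon>" by (simp add: dist_real_def abs_less_iff)
  qed
qed

definition Lip :: "(real \<Rightarrow> real) \<Rightarrow> bool" where
  "Lip f \<longleftrightarrow> (\<exists>M B. \<forall>s\<ge>0. \<forall>t\<ge>0. \<bar>f s - f t\<bar> \<le> M*\<bar>s-t\<bar> \<and> \<bar>f s\<bar> \<le> B)"

lemma Lip_const: "Lip (\<lambda>x. c)"
  unfolding Lip_def by (intro exI[of _ 0] exI[of _ "\<bar>c\<bar>"]) auto

lemma Lip_add: assumes "Lip f" "Lip g" shows "Lip (\<lambda>x. f x + g x)"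
proof -
  obtain M1 B1 where 1: "\<forall>s\<ge>0. \<forall>t\<ge>0. \<bar>f s - f t\<bar> \<le> M1*\<bar>s-t\<bar> \<and> \<bar>f s\<bar> \<le> B1" using assms(1) Lip_def by auto
  obtain M2 B2 where 2: "\<forall>s\<ge>0. \<forall>t\<ge>0. \<bar>g s - g t\<bar> \<le> M2*\<bar>s-t\<bar> \<and> \<bar>g s\<bar> \<le> B2" using assms(2) Lip_def by auto
  show ?thesis unfolding Lip_def
  proof (rule exI[of _ "M1+M2"], rule exI[of _ "B1+B2"], intro allI impI conjI)
    fix s t :: real assume "s \<ge> 0" "t \<ge> 0"
    with 1 2 have a: "\<bar>f s - f t\<bar> \<le> M1*\<bar>s-t\<bar>" "\<bar>g s - g t\<bar> \<le> M2*\<bar>s-t\<bar>" "\<bar>f s\<bar> \<le> B1" "\<bar>g s\<bar> \<le> B2" by auto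
    have "(M1+M2)*\<bar>s-t\<bar> = M1*\<bar>s-t\<bar> + M2*\<bar>s-t\<bar>" by (simp add: distrib_right)
    thus "\<bar>f s + g s - (f t + g t)\<bar> \<le> (M1+M2)*\<bar>s-t\<bar>" using a by smt
    show "\<bar>f s + g s\<bar> \<le> B1+B2" using a by linarith
  qed
qed

lemma Lip_mult: assumes "Lip f" "Lip g" shows "Lip (\<lambda>x. f x * g x)"
proof -
  obtain M1 B1 where 1: "\<forall>s\<ge>0. \<forall>t\<ge>0. \<bar>f s - f t\<bar> \<le> M1*\<bar>s-t\<bar> \<and> \<bar>f s\<bar> \<le> B1" using assms(1) Lip_def by auto
  obtain M2 B2 where 2: "\<forall>s\<ge>0. \<forall>t\<ge>0. \<bar>g s - g t\<bar> \<le> M2*\<bar>s-t\<bar> \<and> \<bar>g s\<bar> \<le> B2" using assms(2) Lip_def by auto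
  have B1: "B1 \<ge> 0" using 1 by force
  have B2: "B2 \<ge> 0" using 2 by force
  show ?thesis unfolding Lip_def
  proof (rule exI[of _ "B1*M2+B2*M1"], rule exI[of _ "B1*B2"], intro allI impI conjI)
    fix s t :: real assume "s \<ge> 0" "t \<ge> 0"
    with 1 2 have a: "\<bar>f s - f t\<bar> \<le> M1*\<bar>s-t\<bar>" "\<bar>g s - g t\<bar> \<le> M2*\<bar>s-t\<bar>" "\<bar>f s\<bar> \<le> B1" "\<bar>g t\<bar> \<le> B2"
       "\<bar>g s\<bar> \<le> B2" by auto
    have "\<bar>f s * g s - f t * g t\<bar> = \<bar>f s * (g s - g t) + g t * (f s - f t)\<bar>" by (simp add: algebra_simps)
    also have "\<dots> \<le> \<bar>f s\<bar> * \<bar>g s - g t\<bar> + \<bar>g t\<bar> * \<bar>f s - f t\<bar>" by (simp add: abs_mult[symmetric] abs_triangle_ineq)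
    also have "\<dots> \<le> B1 * (M2*\<bar>s-t\<bar>) + B2 * (M1*\<bar>s-t\<bar>)"
      using a B1 B2 by (intro add_mono mult_mono) auto
    finally show "\<bar>f s * g s - f t * g t\<bar> \<le> (B1*M2+B2*M1)*\<bar>s-t\<bar>" by (simp add: algebra_simps)
    show "\<bar>f s * g s\<bar> \<le> B1*B2" using a B1 B2 by (simp add: abs_mult mult_mono)
  qed
qed

lemma Lip_minus: "Lip f \<Longrightarrow> Lip (\<lambda>x. - f x)"
  using Lip_mult[OF Lip_const[of "-1"]] by simp

lemma Lip_diff: "Lip f \<Longrightarrow> Lip g \<Longrightarrow> Lip (\<lambda>x. f x - g x)"
  using Lip_add[OF _ Lip_minus] by simp

lemma Lip_cmult: "Lip f \<Longrightarrow> Lip (\<lambda>x. c * f x)"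
  using Lip_mult[OF Lip_const] by simp

lemma Lip_sum: "finite A \<Longrightarrow> (\<And>i. i \<in> A \<Longrightarrow> Lip (f i)) \<Longrightarrow> Lip (\<lambda>x. \<Sum>i\<in>A. f i x)"
proof (induction A rule: finite_induct)
  case empty thus ?case using Lip_const[of 0] by simp
next
  case (insert a A) thus ?case using Lip_add[of "f a" "\<lambda>x. \<Sum>i\<in>A. f i x"] by simp
qed

lemma Lip_deriv:
  fixes f f' :: "real \<Rightarrow> real"
  assumes d: "\<And>x. 0 \<le> x \<Longrightarrow> (f has_real_derivative f' x) (at x within {0..})"
   and db: "\<And>x. 0 \<le> x \<Longrightarrow> \<bar>f' x\<bar> \<le> M" and fb: "\<And>x. 0 \<le> x \<Longrightarrow> \<bar>f x\<bar> \<le> B"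
  shows "Lip f"
proof -
  have key: "\<bar>f s - f t\<bar> \<le> M*\<bar>s-t\<bar>" if st: "0 \<le> s" "s \<le> t" for s t
  proof -
    have "f t - M*t \<le> f s - M * s"
      by (rule deriv_antimono[OF st, where f' = "\<lambda>x. f' x - M"])
         (use d db st in \<open>auto intro!: derivative_eq_intros simp: abs_le_iff\<close>)
    moreover have "- f t - M*t \<le> - f s - M * s"
      by (rule deriv_antimono[OF st, where f' = "\<lambda>x. - f' x - M"])
         (use d db st in \<open>auto intro!: derivative_eq_intros simp: abs_le_iff\<close>)
    ultimately show ?thesis using st by (simp add: abs_le_iff algebra_simps)
  qed
  show ?thesis unfolding Lip_def
  proof (rule exI[of _ M], rule exI[of _ B], intro allI impI conjI)
    fix s t :: real assume "s \<ge> 0" "t \<ge> 0"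
    thus "\<bar>f s - f t\<bar> \<le> M*\<bar>s-t\<bar>" using key[of s t] key[of t s]
      by (cases "s \<le> t") (auto simp: abs_minus_commute)
    show "\<bar>f s\<bar> \<le> B" using fb \<open>s\<ge>0\<close> by auto
  qed
qed

lemma Lip_get: "Lip f \<Longrightarrow> \<exists>M>0. \<forall>s\<ge>0. \<forall>t\<ge>0. \<bar>f s - f t\<bar> \<le> M*\<bar>s-t\<bar>"
proof -
  assume "Lip f"
  then obtain M B where 1: "\<forall>s\<ge>0. \<forall>t\<ge>0. \<bar>f s - f t\<bar> \<le> M*\<bar>s-t\<bar>" unfolding Lip_def by auto
  show ?thesis
  proof (intro exI[of _ "\<bar>M\<bar>+1"] conjI allI impI)
    fix s t :: real assume "s\<ge>0" "t\<ge>0"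
    hence "\<bar>f s - f t\<bar> \<le> M*\<bar>s-t\<bar>" using 1 by auto
    also have "\<dots> \<le> (\<bar>M\<bar>+1)*\<bar>s-t\<bar>" by (intro mult_right_mono) auto
    finally show "\<bar>f s - f t\<bar> \<le> (\<bar>M\<bar>+1)*\<bar>s-t\<bar>" .
  qed auto
qed

lemma cauchy_deriv_small:
  fixes f w :: "real \<Rightarrow> real"
  assumes C: "\<forall>\<eta>>0. \<exists>T. \<forall>s\<ge>T. \<forall>t\<ge>T. \<bar>f s - f t\<bar> < \<eta>"
   and d: "\<And>x. x \<ge> 0 \<Longrightarrow> (f has_real_derivative w x) (at x within {0..})"
   and h: "h>0" and \<epsilon>: "\<epsilon>>0"
  shows "\<exists>T. \<forall>t\<ge>T. \<exists>\<xi>. t < \<xi> \<and> \<xi> < t+h \<and> \<bar>w \<xi>\<bar> < \<epsilon>"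
proof -
  obtain T where T: "\<forall>s\<ge>T. \<forall>t\<ge>T. \<bar>f s - f t\<bar> < h*\<epsilon>" using C h \<epsilon> by (meson mult_pos_pos)
  show ?thesis
  proof (rule exI[of _ "max T 1"], intro allI impI)
    fix t assume t: "max T 1 \<le> t"
    obtain \<xi> where \<xi>: "t < \<xi>" "\<xi> < t+h" "f (t+h) - f t = (t + h - t) * w \<xi>"
      using mvt0[of t "t+h" f w] t h d by auto
    have "\<bar>f (t+h) - f t\<bar> < h*\<epsilon>" using T t h by auto
    hence "h*\<bar>w \<xi>\<bar> < h*\<epsilon>" using \<xi> h by (simp add: abs_mult)
    hence "\<bar>w \<xi>\<bar> < \<epsilon>" using h by simp
    thus "\<exists>\<xi>. t < \<xi> \<and> \<xi> < t+h \<and> \<bar>w \<xi>\<bar> < \<epsilon>" using \<xi> by auto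
  qed
qed

lemma barbalat:
  fixes f w psi :: "real \<Rightarrow> real"
  assumes C: "\<forall>\<eta>>0. \<exists>T. \<forall>s\<ge>T. \<forall>t\<ge>T. \<bar>f s - f t\<bar> < \<eta>"
   and d: "\<And>x. x \<ge> 0 \<Longrightarrow> (f has_real_derivative w x) (at x within {0..})"
   and wle: "\<And>x. x \<ge> 0 \<Longrightarrow> w x \<le> - psi x" and psi0: "\<And>x. x\<ge>0 \<Longrightarrow> psi x \<ge> 0"
   and L: "Lip psi"
  shows "(psi \<longlongrightarrow> 0) at_top"
  unfolding tendsto_iff
proof (intro allI impI)
  fix \<epsilon> :: real assume \<epsilon>: "\<epsilon> > 0"
  obtain M where M: "M>0" "\<forall>s\<ge>0. \<forall>t\<ge>0. \<bar>psi s - psi t\<bar> \<le> M*\<bar>s-t\<bar>" using Lip_get[OF L] by auto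
  define h where "h = \<epsilon>/(2*M)"
  have h: "h > 0" using M \<epsilon> by (simp add: h_def)
  obtain T where T: "\<forall>t\<ge>T. \<exists>\<xi>. t < \<xi> \<and> \<xi> < t+h \<and> \<bar>w \<xi>\<bar> < \<epsilon>/2"
    using cauchy_deriv_small[OF C d h, of "\<epsilon>/2"] \<epsilon> by auto
  show "eventually (\<lambda>t. dist (psi t) 0 < \<epsilon>) at_top" unfolding eventually_at_top_linorder
  proof (intro exI[of _ "max T 0"] allI impI)
    fix t assume t: "max T 0 \<le> t"
    obtain \<xi> where \<xi>: "t < \<xi>" "\<xi> < t+h" "\<bar>w \<xi>\<bar> < \<epsilon>/2" using T t by auto
    have "psi \<xi> < \<epsilon>/2" using wle[of \<xi>] \<xi> t by auto
    moreover have "\<bar>psi t - psi \<xi>\<bar> \<le> M*\<bar>t-\<xi>\<bar>" using M(2)[rule_format, of t \<xi>] t \<xi> by auto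
    moreover have "M*\<bar>t-\<xi>\<bar> \<le> M*h" using \<xi> M by (intro mult_left_mono) auto
    moreover have "M*h = \<epsilon>/2" using M by (simp add: h_def)
    moreover have "psi t \<ge> 0" using psi0 t by auto
    ultimately show "dist (psi t) 0 < \<epsilon>" by (simp add: dist_real_def)
  qed
qed

lemma lip_zero:
  fixes f w z e :: "real \<Rightarrow> real"
  assumes C: "\<forall>\<eta>>0. \<exists>T. \<forall>s\<ge>T. \<forall>t\<ge>T. \<bar>f s - f t\<bar> < \<eta>"
   and d: "\<And>x. x \<ge> 0 \<Longrightarrow> (f has_real_derivative w x) (at x within {0..})"
   and eq: "\<And>x. x\<ge>0 \<Longrightarrow> w x = z x + e x" and e0: "(e \<longlongrightarrow> 0) at_top"
   and L: "Lip z"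
  shows "(z \<longlongrightarrow> 0) at_top"
  unfolding tendsto_iff
proof (intro allI impI)
  fix \<epsilon> :: real assume \<epsilon>: "\<epsilon> > 0"
  obtain M where M: "M>0" "\<forall>s\<ge>0. \<forall>t\<ge>0. \<bar>z s - z t\<bar> \<le> M*\<bar>s-t\<bar>" using Lip_get[OF L] by auto
  define h where "h = \<epsilon>/(4*M)"
  have h: "h > 0" using M \<epsilon> by (simp add: h_def)
  obtain T where T: "\<forall>t\<ge>T. \<exists>\<xi>. t < \<xi> \<and> \<xi> < t+h \<and> \<bar>w \<xi>\<bar> < \<epsilon>/4"
    using cauchy_deriv_small[OF C d h, of "\<epsilon>/4"] \<epsilon> by auto
  have "eventually (\<lambda>x. dist (e x) 0 < \<epsilon>/4) at_top" using \<epsilon> by (intro tendstoD[OF e0]) simp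
  then obtain T1 where T1: "\<And>x. x \<ge> T1 \<Longrightarrow> \<bar>e x\<bar> < \<epsilon>/4" by (auto simp: eventually_at_top_linorder)
  show "eventually (\<lambda>t. dist (z t) 0 < \<epsilon>) at_top" unfolding eventually_at_top_linorder
  proof (intro exI[of _ "max (max T T1) 0"] allI impI)
    fix t assume t: "max (max T T1) 0 \<le> t"
    obtain \<xi> where \<xi>: "t < \<xi>" "\<xi> < t+h" "\<bar>w \<xi>\<bar> < \<epsilon>/4" using T t by auto
    have "\<bar>e \<xi>\<bar> < \<epsilon>/4" using T1[of \<xi>] t \<xi> by auto
    moreover have "z \<xi> = w \<xi> - e \<xi>" using eq[of \<xi>] \<xi> t by auto
    moreover have "\<bar>w \<xi> - e \<xi>\<bar> \<le> \<bar>w \<xi>\<bar> + \<bar>e \<xi>\<bar>" by (rule abs_triangle_ineq4)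
    ultimately have "\<bar>z \<xi>\<bar> < \<epsilon>/2" using \<xi>(3) by linarith
    moreover have "\<bar>z t - z \<xi>\<bar> \<le> M*\<bar>t-\<xi>\<bar>" using M(2)[rule_format, of t \<xi>] t \<xi> by auto
    moreover have "M*\<bar>t-\<xi>\<bar> \<le> M*h" using \<xi> M by (intro mult_left_mono) auto
    moreover have "M*h = \<epsilon>/4" using M by (simp add: h_def)
    ultimately show "dist (z t) 0 < \<epsilon>" by (simp add: dist_real_def)
  qed
qed

lemma conv_cauchy:
  fixes f :: "real \<Rightarrow> real"
  assumes "(f \<longlongrightarrow> L) at_top"
  shows "\<forall>\<eta>>0. \<exists>T. \<forall>s\<ge>T. \<forall>t\<ge>T. \<bar>f s - f t\<bar> < \<eta>"
proof (intro allI impI)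
  fix \<eta> :: real assume "\<eta> > 0"
  hence "eventually (\<lambda>x. dist (f x) L < \<eta>/2) at_top" by (intro tendstoD[OF assms]) simp
  then obtain T where T: "\<And>x. x \<ge> T \<Longrightarrow> \<bar>f x - L\<bar> < \<eta>/2" by (auto simp: eventually_at_top_linorder dist_real_def)
  show "\<exists>T. \<forall>s\<ge>T. \<forall>t\<ge>T. \<bar>f s - f t\<bar> < \<eta>"
  proof (rule exI[of _ T], intro allI impI)
    fix s t assume "s \<ge> T" "t \<ge> T"
    hence "\<bar>f s - L\<bar> < \<eta>/2" "\<bar>f t - L\<bar> < \<eta>/2" using T by auto
    thus "\<bar>f s - f t\<bar> < \<eta>" by linarith
  qed
qed

lemma sq_to_zero:
  fixes f g :: "real \<Rightarrow> real"
  assumes le: "\<And>t. t \<ge> 0 \<Longrightarrow> (f t)^2 \<le> K * g t" and K: "K > 0" and g0: "(g \<longlongrightarrow> 0) at_top"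
  shows "(f \<longlongrightarrow> 0) at_top"
  unfolding tendsto_iff
proof (intro allI impI)
  fix \<epsilon> :: real assume \<epsilon>: "\<epsilon> > 0"
  have "eventually (\<lambda>x. dist (g x) 0 < \<epsilon>^2/K) at_top" using \<epsilon> K by (intro tendstoD[OF g0]) simp
  then obtain T where T: "\<And>x. x \<ge> T \<Longrightarrow> \<bar>g x\<bar> < \<epsilon>^2/K" by (auto simp: eventually_at_top_linorder)
  show "eventually (\<lambda>t. dist (f t) 0 < \<epsilon>) at_top" unfolding eventually_at_top_linorder
  proof (intro exI[of _ "max T 0"] allI impI)
    fix t assume t: "max T 0 \<le> t"
    have "(f t)^2 \<le> K * g t" using le t by auto
    also have "\<dots> < K * (\<epsilon>^2/K)" using T[of t] t K by (intro mult_strict_left_mono) auto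
    also have "\<dots> = \<epsilon>^2" using K by simp
    finally have sq: "\<bar>f t\<bar>^2 < \<epsilon>^2" by simp
    have "\<bar>f t\<bar> < \<epsilon>" by (rule power_less_imp_less_base[OF sq]) (use \<epsilon> in simp)
    thus "dist (f t) 0 < \<epsilon>" by (simp add: dist_real_def)
  qed
qed



definition G :: "real \<Rightarrow> real \<Rightarrow> real" where
  "G a x = x - a - a * (ln x - ln a)"

lemma G_nonneg: assumes "a > 0" "x > 0" shows "G a x \<ge> 0"
proof -
  have "ln (x/a) \<le> x/a - 1" using assms by (intro ln_le_minus_one) auto
  hence "a * (ln x - ln a) \<le> a * (x/a - 1)" using assms by (simp add: ln_div)
  also have "\<dots> = x - a" using assms by (simp add: field_simps)
  finally show ?thesis unfolding G_def by simp
qed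

lemma G_upper: assumes "a > 0" "x > 0" shows "G a x \<le> (x-a)^2/x"
proof -
  have "ln (a/x) \<le> a/x - 1" using assms by (intro ln_le_minus_one) auto
  hence "ln a - ln x \<le> a/x - 1" using assms by (simp add: ln_div)
  hence "a * (ln a - ln x) \<le> a * (a/x - 1)" using assms by (intro mult_left_mono) auto
  hence "- a * (ln x - ln a) \<le> a * (a/x - 1)" by (simp add: algebra_simps)
  hence "G a x \<le> x - a + a * (a/x - 1)" unfolding G_def by simp
  also have "\<dots> = (x-a)^2/x" using assms by (simp add: field_simps power2_eq_square)
  finally show ?thesis .
qed

lemma G_lower: assumes "a > 0" "x > 0" "a \<le> 1" "x \<le> 1" shows "(x-a)^2 \<le> 4 * G a x"
proof -
  define u v where "u = sqrt x" "v = sqrt a"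
  have uv: "u > 0" "v > 0" "u \<le> 1" "v \<le> 1" using assms by (auto simp: u_v_def)
  have x: "x = u^2" and a: "a = v^2" using assms by (auto simp: u_v_def)
  have "ln (u/v) \<le> u/v - 1" using uv by (intro ln_le_minus_one) auto
  hence l: "ln u - ln v \<le> u/v - 1" using uv by (simp add: ln_div)
  have "ln x - ln a = 2 * (ln u - ln v)" unfolding x a using uv by (simp add: ln_realpow)
  hence "a * (ln x - ln a) \<le> v^2 * (2 * (u/v - 1))" unfolding a using l by (intro mult_left_mono) auto
  also have "\<dots> = 2 * u * v - 2 * v^2" using uv by (simp add: field_simps power2_eq_square)
  finally have g: "G a x \<ge> (u - v)^2" unfolding G_def x a by (simp add: power2_eq_square algebra_simps)
  have "(x-a)^2 = (u-v)^2 * (u+v)^2" unfolding x a by (simp add: power2_eq_square algebra_simps)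
  also have "\<dots> \<le> (u-v)^2 * 4"
  proof (intro mult_left_mono)
    have "u + v \<le> 2" "0 \<le> u + v" using uv by auto
    hence "(u+v)^2 \<le> 2^2" by (intro power_mono) auto
    thus "(u+v)^2 \<le> 4" by simp
  qed simp
  finally show ?thesis using g by simp
qed

locale sviqr =
  fixes n :: nat and p lam phi mu :: "nat \<Rightarrow> real"
    and b d Phi alpha beta gamma eta omega delta :: real
    and Se Ve Ie Qe Rst :: "nat \<Rightarrow> real"
  assumes n_ge: "n \<ge> 1"
    and p_pos: "\<forall>k\<in>{1..n}. p k > 0"
    and bd: "b > d" and d_pos: "d > 0"
    and Phi_pos: "Phi > 0"
    and par_pos: "\<forall>k\<in>{1..n}. lam k > 0 \<and> phi k > 0 \<and> mu k > 0"
    and const_pos: "alpha > 0" "beta > 0" "gamma > 0" "eta > 0" "omega > 0"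
    and delta: "0 \<le> delta" "delta \<le> 1"
    and Eq: "is_endemic_equilibrium n p lam phi mu b d Phi alpha beta gamma eta omega delta
               Se Ve Ie Qe Rst"
begin

definition "c k = phi k * p k / avgdeg n p"
definition "D = gamma + beta + d"
definition "ths = Theta n p phi Ie"
definition "Cs = (\<Sum>k=1..n. c k)"

lemma avg_pos: "avgdeg n p > 0"
  unfolding avgdeg_def using p_pos n_ge by (intro sum_pos) auto

lemma Theta_c: "Theta n p phi X = (\<Sum>i=1..n. c i * X i)"
  unfolding Theta_def c_def by (simp add: sum_distrib_left)

lemma c_pos: "k \<in> {1..n} \<Longrightarrow> c k > 0"
  unfolding c_def using avg_pos p_pos par_pos by auto

lemma D_pos: "D > 0" unfolding D_def using const_pos d_pos by simp

lemma Ns_bounds: "k \<in> {1..n} \<Longrightarrow> 0 < Nstar b d Phi k \<and> Nstar b d Phi k < 1"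
proof -
  assume k: "k \<in> {1..n}"
  have pos: "b * real k * Phi > 0" using k bd d_pos Phi_pos by auto
  show ?thesis unfolding Nstar_def using pos d_pos by (simp add: divide_pos_pos)
qed

lemma Lam_eq: "Lam b d Phi k = d * Nstar b d Phi k"
proof -
  have "b * real k * Phi \<ge> 0" using bd d_pos Phi_pos by simp
  hence "d + b * real k * Phi \<noteq> 0" using d_pos by linarith
  thus ?thesis unfolding Lam_def Nstar_def by (simp add: field_simps)
qed

lemma Lam_pos: "k \<in> {1..n} \<Longrightarrow> Lam b d Phi k > 0"
  using Ns_bounds d_pos unfolding Lam_eq by simp

lemma ths_pos: "ths > 0" using Eq unfolding is_endemic_equilibrium_def ths_def by simp

lemma ths_c: "ths = (\<Sum>i=1..n. c i * Ie i)" unfolding ths_def Theta_c ..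

lemma E1: "k \<in> {1..n} \<Longrightarrow> Lam b d Phi k - lam k * Se k * ths + omega * Ve k - (mu k + d) * Se k = 0"
  using Eq unfolding is_endemic_equilibrium_def rhsS_def ths_def by auto
lemma E2: "k \<in> {1..n} \<Longrightarrow> mu k * Se k - delta * lam k * Ve k * ths - (d + omega + alpha) * Ve k = 0"
  using Eq unfolding is_endemic_equilibrium_def rhsV_def ths_def by auto
lemma E3: "k \<in> {1..n} \<Longrightarrow> lam k * Se k * ths + delta * lam k * Ve k * ths - D * Ie k = 0"
  using Eq unfolding is_endemic_equilibrium_def rhsI_def ths_def D_def by auto
lemma E4: "k \<in> {1..n} \<Longrightarrow> beta * Ie k - (eta + d) * Qe k = 0"
  using Eq unfolding is_endemic_equilibrium_def rhsQ_def by auto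
lemma E5: "k \<in> {1..n} \<Longrightarrow> gamma * Ie k + eta * Qe k + alpha * Ve k - d * Rst k = 0"
  using Eq unfolding is_endemic_equilibrium_def rhsR_def by auto
lemma Enn: "k \<in> {1..n} \<Longrightarrow> Se k \<ge> 0 \<and> Ve k \<ge> 0 \<and> Ie k \<ge> 0 \<and> Qe k \<ge> 0 \<and> Rst k \<ge> 0"
  using Eq unfolding is_endemic_equilibrium_def by auto

lemma Se_pos: "k \<in> {1..n} \<Longrightarrow> Se k > 0"
proof -
  assume k: "k \<in> {1..n}"
  have "(lam k * ths + mu k + d) * Se k = Lam b d Phi k + omega * Ve k" using E1[OF k] by (simp add: algebra_simps)
  moreover have "Lam b d Phi k + omega * Ve k > 0" using Lam_pos[OF k] Enn[OF k] const_pos by (simp add: add_pos_nonneg)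
  moreover have "lam k * ths + mu k + d > 0" using par_pos k ths_pos d_pos by (simp add: add_pos_pos)
  ultimately have "0 < (lam k * ths + mu k + d) * Se k" "lam k * ths + mu k + d > 0" by simp_all
  thus ?thesis using zero_less_mult_pos by blast
qed

lemma Ve_pos: "k \<in> {1..n} \<Longrightarrow> Ve k > 0"
proof -
  assume k: "k \<in> {1..n}"
  have "(delta * lam k * ths + (d + omega + alpha)) * Ve k = mu k * Se k" using E2[OF k] by (simp add: algebra_simps)
  moreover have "mu k * Se k > 0" using Se_pos[OF k] par_pos k by simp
  moreover have "lam k > 0" using par_pos k by auto
  hence "delta * lam k * ths + (d + omega + alpha) > 0" using ths_pos d_pos delta const_pos
    by (intro add_nonneg_pos) auto
  ultimately have "0 < (delta * lam k * ths + (d + omega + alpha)) * Ve k" "delta * lam k * ths + (d + omega + alpha) > 0" by simp_all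
  thus ?thesis using zero_less_mult_pos by blast
qed

lemma Ie_pos: "k \<in> {1..n} \<Longrightarrow> Ie k > 0"
proof -
  assume k: "k \<in> {1..n}"
  have "D * Ie k = lam k * Se k * ths + delta * lam k * Ve k * ths" using E3[OF k] by simp
  moreover have "lam k > 0" using par_pos k by auto
  hence "lam k * Se k * ths + delta * lam k * Ve k * ths > 0"
    using Se_pos[OF k] Ve_pos[OF k] ths_pos delta by (intro add_pos_nonneg) auto
  ultimately show ?thesis using D_pos by (metis zero_less_mult_pos)
qed

lemma E_sum: "k \<in> {1..n} \<Longrightarrow> Se k + Ve k + Ie k + Qe k + Rst k = Nstar b d Phi k"
proof -
  assume k: "k \<in> {1..n}"
  have "Lam b d Phi k - d * (Se k + Ve k + Ie k + Qe k + Rst k) = 0"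
    using E1[OF k] E2[OF k] E3[OF k] E4[OF k] E5[OF k] unfolding D_def by (simp add: algebra_simps)
  hence "d * (Se k + Ve k + Ie k + Qe k + Rst k) = d * Nstar b d Phi k" using Lam_eq[of k] by linarith
  thus ?thesis using d_pos by auto
qed

lemma E_le1: "k \<in> {1..n} \<Longrightarrow> Se k \<le> 1 \<and> Ve k \<le> 1 \<and> Ie k \<le> 1 \<and> Qe k \<le> 1 \<and> Rst k \<le> 1"
  using E_sum[of k] Ns_bounds[of k] Enn[of k] by auto

end


lemma exp_weight_pos:
  fixes f f' :: "real \<Rightarrow> real"
  assumes t: "0 \<le> t" and d: "\<And>x. 0 \<le> x \<Longrightarrow> x \<le> t \<Longrightarrow> (f has_real_derivative f' x) (at x within {0..})"
    and s: "\<And>x. 0 < x \<Longrightarrow> x < t \<Longrightarrow> f' x + K * f x \<ge> 0" and f0: "f 0 > 0"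
  shows "f t > 0"
proof -
  have "f 0 * exp (K * 0) \<le> f t * exp (K * t)"
  proof (rule deriv_mono[OF order.refl t, where f' = "\<lambda>x. (f' x + K * f x) * exp (K * x)"])
    fix x assume x: "0 \<le> x" "x \<le> t"
    have "((\<lambda>x. f x * exp (K * x)) has_real_derivative (f' x * exp (K * x) + f x * (exp (K * x) * K))) (at x within {0..})"
      by (rule derivative_eq_intros d[OF x] refl)+ simp
    moreover have "f' x * exp (K * x) + f x * (exp (K * x) * K) = (f' x + K * f x) * exp (K * x)"
      by (simp add: algebra_simps)
    ultimately show "((\<lambda>x. f x * exp (K * x)) has_real_derivative (f' x + K * f x) * exp (K * x)) (at x within {0..})" by simp
  next
    fix x assume "0 < x" "x < t"
    thus "(f' x + K * f x) * exp (K * x) \<ge> 0" using s by simp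
  qed
  hence "0 < f t * exp (K * t)" using f0 by simp
  thus ?thesis by (simp add: zero_less_mult_iff)
qed

locale sol = sviqr +
  fixes S V I Q R :: "real \<Rightarrow> nat \<Rightarrow> real"
  assumes solv: "is_solution n p lam phi mu b d Phi alpha beta gamma eta omega delta S V I Q R"
    and adm: "admissible_init n b d Phi (S 0) (V 0) (I 0) (Q 0) (R 0)"
begin

definition "fS t k = rhsS n p lam phi mu b d Phi omega (S t) (V t) (I t) k"
definition "fV t k = rhsV n p lam phi mu d alpha omega delta (S t) (V t) (I t) k"
definition "fI t k = rhsI n p lam phi d beta gamma delta (S t) (V t) (I t) k"
definition "fQ t k = rhsQ d beta eta (I t) (Q t) k"
definition "fR t k = rhsR d alpha gamma eta (V t) (I t) (Q t) (R t) k"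
definition "th t = Theta n p phi (I t)"

lemma th_c: "th t = (\<Sum>i=1..n. c i * I t i)" unfolding th_def Theta_c ..

lemma dS: "t \<ge> 0 \<Longrightarrow> k \<in> {1..n} \<Longrightarrow> ((\<lambda>\<tau>. S \<tau> k) has_real_derivative fS t k) (at t within {0..})"
  using solv unfolding is_solution_def fS_def by blast
lemma dV: "t \<ge> 0 \<Longrightarrow> k \<in> {1..n} \<Longrightarrow> ((\<lambda>\<tau>. V \<tau> k) has_real_derivative fV t k) (at t within {0..})"
  using solv unfolding is_solution_def fV_def by blast
lemma dI: "t \<ge> 0 \<Longrightarrow> k \<in> {1..n} \<Longrightarrow> ((\<lambda>\<tau>. I \<tau> k) has_real_derivative fI t k) (at t within {0..})"
  using solv unfolding is_solution_def fI_def by blast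
lemma dQ: "t \<ge> 0 \<Longrightarrow> k \<in> {1..n} \<Longrightarrow> ((\<lambda>\<tau>. Q \<tau> k) has_real_derivative fQ t k) (at t within {0..})"
  using solv unfolding is_solution_def fQ_def by blast
lemma dR: "t \<ge> 0 \<Longrightarrow> k \<in> {1..n} \<Longrightarrow> ((\<lambda>\<tau>. R \<tau> k) has_real_derivative fR t k) (at t within {0..})"
  using solv unfolding is_solution_def fR_def by blast

lemma dth: "t \<ge> 0 \<Longrightarrow> (th has_real_derivative (\<Sum>i=1..n. c i * fI t i)) (at t within {0..})"
proof -
  assume t: "t \<ge> 0"
  have e: "th = (\<lambda>t. \<Sum>i=1..n. c i * I t i)" by (rule ext) (simp add: th_c)
  show ?thesis unfolding e by (intro DERIV_sum DERIV_cmult dI[OF t]) simp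
qed

lemma init: "k \<in> {1..n} \<Longrightarrow> S 0 k > 0 \<and> V 0 k > 0 \<and> I 0 k > 0 \<and> Q 0 k > 0 \<and> R 0 k > 0 \<and>
    S 0 k + V 0 k + I 0 k + Q 0 k + R 0 k = Nstar b d Phi k"
  using adm unfolding admissible_init_def by blast

definition "Ppos t \<longleftrightarrow> (\<forall>k\<in>{1..n}. S t k > 0 \<and> V t k > 0 \<and> I t k > 0)"

lemma th_cont: "continuous_on {0..t} th"
  by (rule cont_from_deriv[OF dth]) auto

lemma pos_step2:
  assumes t0: "t0 > 0" and P: "\<And>s. 0 \<le> s \<Longrightarrow> s < t0 \<Longrightarrow> Ppos s"
  shows "Ppos t0"
proof -
  obtain x0 where x0: "x0 \<in> {0..t0}" "\<forall>y\<in>{0..t0}. th y \<le> th x0"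
    using continuous_attains_sup[of "{0..t0}" th] th_cont t0 by auto
  define B where "B = th x0"
  have B: "\<And>s. 0 \<le> s \<Longrightarrow> s \<le> t0 \<Longrightarrow> th s \<le> B" using x0(2) unfolding B_def by auto
  have thnn: "th s \<ge> 0" if "0 \<le> s" "s < t0" for s
    unfolding th_c using P[OF that] c_pos unfolding Ppos_def by (intro sum_nonneg) (auto intro: less_imp_le)
  show ?thesis unfolding Ppos_def
  proof (intro ballI conjI)
    fix k assume k: "k \<in> {1..n}"
    have lk: "lam k > 0" "mu k > 0" using par_pos k by auto
    show "S t0 k > 0"
    proof (rule exp_weight_pos[where f = "\<lambda>x. S x k" and t = t0 and f' = "\<lambda>x. fS x k" and K = "lam k * B + mu k + d"])
      fix x assume x: "0 < x" "x < t0"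
      have Px: "S x k > 0" "V x k > 0" using P[of x] x k unfolding Ppos_def by auto
      have "lam k * S x k * th x \<le> lam k * S x k * B" using B[of x] x Px lk by (intro mult_left_mono) auto
      moreover have "fS x k + (lam k * B + mu k + d) * S x k
          = Lam b d Phi k + omega * V x k + (lam k * S x k * B - lam k * S x k * th x)"
        unfolding fS_def rhsS_def th_def by (simp add: algebra_simps)
      moreover have "Lam b d Phi k > 0" using Lam_pos[OF k] .
      moreover have "omega * V x k > 0" using const_pos Px by simp
      ultimately show "fS x k + (lam k * B + mu k + d) * S x k \<ge> 0" by linarith
    qed (use t0 dS k init in auto)
    show "V t0 k > 0"
    proof (rule exp_weight_pos[where f = "\<lambda>x. V x k" and t = t0 and f' = "\<lambda>x. fV x k" and K = "delta * lam k * B + (d + omega + alpha)"])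
      fix x assume x: "0 < x" "x < t0"
      have Px: "S x k > 0" "V x k > 0" using P[of x] x k unfolding Ppos_def by auto
      have "delta * lam k * V x k * th x \<le> delta * lam k * V x k * B" using B[of x] x Px lk delta by (intro mult_left_mono) auto
      moreover have "fV x k + (delta * lam k * B + (d + omega + alpha)) * V x k
          = mu k * S x k + (delta * lam k * V x k * B - delta * lam k * V x k * th x)"
        unfolding fV_def rhsV_def th_def by (simp add: algebra_simps)
      moreover have "mu k * S x k > 0" using lk Px by simp
      ultimately show "fV x k + (delta * lam k * B + (d + omega + alpha)) * V x k \<ge> 0" by linarith
    qed (use t0 dV k init in auto)
    show "I t0 k > 0"
    proof (rule exp_weight_pos[where f = "\<lambda>x. I x k" and t = t0 and f' = "\<lambda>x. fI x k" and K = "D"])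
      fix x assume x: "0 < x" "x < t0"
      have Px: "S x k > 0" "V x k > 0" using P[of x] x k unfolding Ppos_def by auto
      have "th x \<ge> 0" using thnn x by auto
      hence "lam k * S x k * th x \<ge> 0" "delta * lam k * V x k * th x \<ge> 0" using Px lk delta by auto
      moreover have "fI x k + D * I x k = lam k * S x k * th x + delta * lam k * V x k * th x"
        unfolding fI_def rhsI_def th_def D_def by (simp add: algebra_simps)
      ultimately show "fI x k + D * I x k \<ge> 0" by linarith
    qed (use t0 dI k init in auto)
  qed
qed

lemma pos_step1:
  assumes t0: "t0 \<ge> 0" and P: "Ppos t0"
  shows "\<exists>\<epsilon>>0. \<forall>s. t0 \<le> s \<and> s < t0 + \<epsilon> \<longrightarrow> Ppos s"
proof -
  have ev: "eventually (\<lambda>s. 0 < f s) (at t0 within {0..})"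
    if "continuous (at t0 within {0..}) f" "f t0 > 0" for f :: "real \<Rightarrow> real"
    using order_tendstoD(1)[OF that(1)[unfolded continuous_within] that(2)] .
  have "\<forall>k\<in>{1..n}. eventually (\<lambda>s. S s k > 0 \<and> V s k > 0 \<and> I s k > 0) (at t0 within {0..})"
  proof
    fix k assume k: "k \<in> {1..n}"
    have p: "S t0 k > 0" "V t0 k > 0" "I t0 k > 0" using P k unfolding Ppos_def by auto
    have "eventually (\<lambda>s. S s k > 0) (at t0 within {0..})"
      by (rule ev[OF DERIV_continuous[OF dS[OF t0 k]] p(1)])
    moreover have "eventually (\<lambda>s. V s k > 0) (at t0 within {0..})"
      by (rule ev[OF DERIV_continuous[OF dV[OF t0 k]] p(2)])
    moreover have "eventually (\<lambda>s. I s k > 0) (at t0 within {0..})"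
      by (rule ev[OF DERIV_continuous[OF dI[OF t0 k]] p(3)])
    ultimately show "eventually (\<lambda>s. S s k > 0 \<and> V s k > 0 \<and> I s k > 0) (at t0 within {0..})"
      by eventually_elim auto
  qed
  hence "eventually Ppos (at t0 within {0..})"
    unfolding Ppos_def by (rule eventually_ball_finite[rotated]) simp
  then obtain e where e: "e > 0" "\<forall>x\<in>{0..}. x \<noteq> t0 \<and> dist x t0 < e \<longrightarrow> Ppos x"
    unfolding eventually_at by auto
  show ?thesis
  proof (intro exI[of _ e] conjI allI impI)
    fix s assume s: "t0 \<le> s \<and> s < t0 + e"
    show "Ppos s"
    proof (cases "s = t0")
      case True thus ?thesis using P by simp
    next
      case False thus ?thesis using e s t0 by (auto simp: dist_real_def)
    qed
  qed (rule e(1))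
qed

lemma pos_all: "t \<ge> 0 \<Longrightarrow> Ppos t"
proof (rule ccontr)
  assume t: "t \<ge> 0" "\<not> Ppos t"
  define Bs where "Bs = {s. 0 \<le> s \<and> \<not> Ppos s}"
  define t0 where "t0 = Inf Bs"
  have ne: "Bs \<noteq> {}" using t by (auto simp: Bs_def)
  have bb: "bdd_below Bs" unfolding Bs_def by (rule bdd_belowI[of _ 0]) auto
  have t00: "t0 \<ge> 0" unfolding t0_def using ne by (intro cInf_greatest) (auto simp: Bs_def)
  have below: "Ppos s" if "0 \<le> s" "s < t0" for s
  proof (rule ccontr)
    assume "\<not> Ppos s"
    hence "s \<in> Bs" using that by (simp add: Bs_def)
    hence "t0 \<le> s" unfolding t0_def by (rule cInf_lower[OF _ bb])
    thus False using that by simp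
  qed
  have Pt0: "Ppos t0"
  proof (cases "t0 = 0")
    case True thus ?thesis using init unfolding Ppos_def by auto
  next
    case False
    hence "t0 > 0" using t00 by simp
    thus ?thesis by (rule pos_step2) (rule below)
  qed
  obtain e where e: "e > 0" "\<And>s. t0 \<le> s \<Longrightarrow> s < t0 + e \<Longrightarrow> Ppos s" using pos_step1[OF t00 Pt0] by auto
  have "t0 + e \<le> t0" unfolding t0_def
  proof (rule cInf_greatest[OF ne])
    fix x assume x: "x \<in> Bs"
    have "t0 \<le> x" unfolding t0_def by (rule cInf_lower[OF x bb])
    moreover have "\<not> Ppos x" using x by (simp add: Bs_def)
    ultimately have "\<not> x < t0 + e" using e(2)[of x] by auto
    thus "Inf Bs + e \<le> x" unfolding t0_def by simp
  qed
  thus False using e(1) by simp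
qed

end


lemma DERIV_G:
  assumes "(f has_real_derivative f') (at t within s)" "f t > 0" "a > 0"
  shows "((\<lambda>x. G a (f x)) has_real_derivative (1 - a / f t) * f') (at t within s)"
  unfolding G_def using assms by (auto intro!: derivative_eq_intros simp: field_simps)

context sol begin

lemma posS: "t \<ge> 0 \<Longrightarrow> k \<in> {1..n} \<Longrightarrow> S t k > 0" using pos_all unfolding Ppos_def by auto
lemma posV: "t \<ge> 0 \<Longrightarrow> k \<in> {1..n} \<Longrightarrow> V t k > 0" using pos_all unfolding Ppos_def by auto
lemma posI: "t \<ge> 0 \<Longrightarrow> k \<in> {1..n} \<Longrightarrow> I t k > 0" using pos_all unfolding Ppos_def by auto

lemma posQ: assumes t: "t \<ge> 0" and k: "k \<in> {1..n}" shows "Q t k > 0"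
proof (rule exp_weight_pos[where f = "\<lambda>x. Q x k" and t = t and f' = "\<lambda>x. fQ x k" and K = "eta + d"])
  fix x assume x: "0 < x" "x < t"
  have "fQ x k + (eta + d) * Q x k = beta * I x k" unfolding fQ_def rhsQ_def by (simp add: algebra_simps)
  moreover have "beta * I x k > 0" using posI[of x k] x k const_pos by simp
  ultimately show "fQ x k + (eta + d) * Q x k \<ge> 0" by simp
qed (use t dQ k init in auto)

lemma posR: assumes t: "t \<ge> 0" and k: "k \<in> {1..n}" shows "R t k > 0"
proof (rule exp_weight_pos[where f = "\<lambda>x. R x k" and t = t and f' = "\<lambda>x. fR x k" and K = "d"])
  fix x assume x: "0 < x" "x < t"
  have "fR x k + d * R x k = gamma * I x k + eta * Q x k + alpha * V x k" unfolding fR_def rhsR_def by (simp add: algebra_simps)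
  moreover have "gamma * I x k > 0" "eta * Q x k > 0" "alpha * V x k > 0"
    using posI[of x k] posQ[of x k] posV[of x k] x k const_pos by simp_all
  ultimately show "fR x k + d * R x k \<ge> 0" by simp
qed (use t dR k init in auto)

lemma cons: assumes t: "t \<ge> 0" and k: "k \<in> {1..n}"
  shows "S t k + V t k + I t k + Q t k + R t k = Nstar b d Phi k"
proof -
  define h where "h x = (S x k + V x k + I x k + Q x k + R x k - Nstar b d Phi k) * exp (d * x)" for x
  have dh: "(h has_real_derivative 0) (at x within {0..})" if x: "0 \<le> x" for x
  proof -
    have "(h has_real_derivative ((fS x k + fV x k + fI x k + fQ x k + fR x k) * exp (d * x)
        + (S x k + V x k + I x k + Q x k + R x k - Nstar b d Phi k) * (exp (d * x) * d))) (at x within {0..})"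
      unfolding h_def by (rule derivative_eq_intros dS[OF x k] dV[OF x k] dI[OF x k] dQ[OF x k] dR[OF x k] refl)+ simp
    moreover have "fS x k + fV x k + fI x k + fQ x k + fR x k = Lam b d Phi k - d * (S x k + V x k + I x k + Q x k + R x k)"
      unfolding fS_def fV_def fI_def fQ_def fR_def rhsS_def rhsV_def rhsI_def rhsQ_def rhsR_def by (simp add: algebra_simps)
    moreover have "(fS x k + fV x k + fI x k + fQ x k + fR x k) * exp (d * x)
        + (S x k + V x k + I x k + Q x k + R x k - Nstar b d Phi k) * (exp (d * x) * d)
        = ((fS x k + fV x k + fI x k + fQ x k + fR x k) + d * (S x k + V x k + I x k + Q x k + R x k - Nstar b d Phi k)) * exp (d * x)"
      by (simp add: algebra_simps)
    ultimately show ?thesis unfolding Lam_eq by (simp add: algebra_simps)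
  qed
  have "h 0 \<le> h t" by (rule deriv_mono[OF order.refl t dh]) auto
  moreover have "h t \<le> h 0" by (rule deriv_antimono[OF order.refl t dh]) auto
  moreover have "h 0 = 0" unfolding h_def using init[OF k] by simp
  ultimately have "h t = 0" by simp
  thus ?thesis unfolding h_def by simp
qed

lemma bnd: assumes t: "t \<ge> 0" and k: "k \<in> {1..n}"
  shows "0 < S t k \<and> S t k < 1 \<and> 0 < V t k \<and> V t k < 1 \<and> 0 < I t k \<and> I t k < 1 \<and>
         0 < Q t k \<and> Q t k < 1 \<and> 0 < R t k \<and> R t k < 1"
  using cons[OF t k] Ns_bounds[OF k] posS[OF t k] posV[OF t k] posI[OF t k] posQ[OF t k] posR[OF t k]
  by linarith

lemma Cs_pos: "Cs > 0" unfolding Cs_def using c_pos n_ge by (intro sum_pos) auto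

lemma th_bnd: assumes t: "t \<ge> 0" shows "0 < th t \<and> th t \<le> Cs"
proof
  show "0 < th t" unfolding th_c using n_ge c_pos bnd[OF t] by (intro sum_pos) auto
  show "th t \<le> Cs" unfolding th_c Cs_def
  proof (rule sum_mono)
    fix k assume k: "k \<in> {1..n}"
    show "c k * I t k \<le> c k" using c_pos[OF k] bnd[OF t k] by (simp add: mult_left_le)
  qed
qed

lemma fS_eq: "fS t k = Lam b d Phi k - lam k * S t k * th t + omega * V t k - (mu k + d) * S t k"
  unfolding fS_def rhsS_def th_def ..
lemma fV_eq: "fV t k = mu k * S t k - delta * lam k * V t k * th t - (d + omega + alpha) * V t k"
  unfolding fV_def rhsV_def th_def ..
lemma fI_eq: "fI t k = lam k * S t k * th t + delta * lam k * V t k * th t - D * I t k"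
  unfolding fI_def rhsI_def th_def D_def ..
lemma fQ_eq: "fQ t k = beta * I t k - (eta + d) * Q t k"
  unfolding fQ_def rhsQ_def ..
lemma fR_eq: "fR t k = gamma * I t k + eta * Q t k + alpha * V t k - d * R t k"
  unfolding fR_def rhsR_def ..

lemma prod_bnd: assumes "0 \<le> x" "x \<le> 1" "0 \<le> y" "y \<le> Cs" "l \<ge> 0"
  shows "0 \<le> l * x * y" "l * x * y \<le> l * Cs"
proof -
  have "x * y \<le> 1 * Cs" using assms by (intro mult_mono) auto
  hence "l * (x * y) \<le> l * Cs" using assms by (intro mult_left_mono) auto
  thus "l * x * y \<le> l * Cs" by (simp add: mult.assoc)
  show "0 \<le> l * x * y" using assms by simp
qed

lemma fS_bnd: "t \<ge> 0 \<Longrightarrow> k \<in> {1..n} \<Longrightarrow> \<bar>fS t k\<bar> \<le> Lam b d Phi k + lam k * Cs + omega + (mu k + d)"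
proof -
  assume t: "t \<ge> 0" and k: "k \<in> {1..n}"
  have b: "0 < S t k" "S t k < 1" "0 < V t k" "V t k < 1" using bnd[OF t k] by auto
  have p: "lam k > 0" "mu k > 0" using par_pos k by auto
  have "0 \<le> lam k * S t k * th t" "lam k * S t k * th t \<le> lam k * Cs"
    using prod_bnd[of "S t k" "th t" "lam k"] b th_bnd[OF t] p by auto
  moreover have "0 \<le> omega * V t k" "omega * V t k \<le> omega" using b const_pos by (auto simp: mult_left_le)
  moreover have "0 \<le> (mu k + d) * S t k" "(mu k + d) * S t k \<le> mu k + d" using b p d_pos by (auto simp: mult_left_le)
  moreover have "Lam b d Phi k > 0" using Lam_pos[OF k] .
  ultimately show ?thesis unfolding fS_eq abs_le_iff by linarith
qed

lemma fV_bnd: "t \<ge> 0 \<Longrightarrow> k \<in> {1..n} \<Longrightarrow> \<bar>fV t k\<bar> \<le> mu k + delta * lam k * Cs + (d + omega + alpha)"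
proof -
  assume t: "t \<ge> 0" and k: "k \<in> {1..n}"
  have b: "0 < S t k" "S t k < 1" "0 < V t k" "V t k < 1" using bnd[OF t k] by auto
  have p: "lam k > 0" "mu k > 0" using par_pos k by auto
  have "0 \<le> (delta * lam k) * V t k * th t" "(delta * lam k) * V t k * th t \<le> (delta * lam k) * Cs"
    using prod_bnd[of "V t k" "th t" "delta * lam k"] b th_bnd[OF t] p delta by auto
  moreover have "0 \<le> mu k * S t k" "mu k * S t k \<le> mu k" using b p by (auto simp: mult_left_le)
  moreover have "0 \<le> (d + omega + alpha) * V t k" "(d + omega + alpha) * V t k \<le> d + omega + alpha"
    using b const_pos d_pos by (auto simp: mult_left_le)
  ultimately show ?thesis unfolding fV_eq abs_le_iff by (simp add: mult.assoc)
qed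

lemma fI_bnd: "t \<ge> 0 \<Longrightarrow> k \<in> {1..n} \<Longrightarrow> \<bar>fI t k\<bar> \<le> lam k * Cs + delta * lam k * Cs + D"
proof -
  assume t: "t \<ge> 0" and k: "k \<in> {1..n}"
  have b: "0 < S t k" "S t k < 1" "0 < V t k" "V t k < 1" "0 < I t k" "I t k < 1" using bnd[OF t k] by auto
  have p: "lam k > 0" "mu k > 0" using par_pos k by auto
  have "0 \<le> (delta * lam k) * V t k * th t" "(delta * lam k) * V t k * th t \<le> (delta * lam k) * Cs"
    using prod_bnd[of "V t k" "th t" "delta * lam k"] b th_bnd[OF t] p delta by auto
  moreover have "0 \<le> lam k * S t k * th t" "lam k * S t k * th t \<le> lam k * Cs"
    using prod_bnd[of "S t k" "th t" "lam k"] b th_bnd[OF t] p by auto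
  moreover have "0 \<le> D * I t k" "D * I t k \<le> D" using b D_pos by (auto simp: mult_left_le)
  ultimately show ?thesis unfolding fI_eq abs_le_iff by (simp add: mult.assoc)
qed

lemma fQ_bnd: "t \<ge> 0 \<Longrightarrow> k \<in> {1..n} \<Longrightarrow> \<bar>fQ t k\<bar> \<le> beta + (eta + d)"
proof -
  assume t: "t \<ge> 0" and k: "k \<in> {1..n}"
  have b: "0 < I t k" "I t k < 1" "0 < Q t k" "Q t k < 1" using bnd[OF t k] by auto
  have "0 \<le> beta * I t k" "beta * I t k \<le> beta" using b const_pos by (auto simp: mult_left_le)
  moreover have "0 \<le> (eta + d) * Q t k" "(eta + d) * Q t k \<le> eta + d" using b const_pos d_pos by (auto simp: mult_left_le)
  ultimately show ?thesis unfolding fQ_eq abs_le_iff by linarith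
qed

lemma fR_bnd: "t \<ge> 0 \<Longrightarrow> k \<in> {1..n} \<Longrightarrow> \<bar>fR t k\<bar> \<le> gamma + eta + alpha + d"
proof -
  assume t: "t \<ge> 0" and k: "k \<in> {1..n}"
  have b: "0 < I t k" "I t k < 1" "0 < Q t k" "Q t k < 1" "0 < V t k" "V t k < 1" "0 < R t k" "R t k < 1"
    using bnd[OF t k] by auto
  have "0 \<le> gamma * I t k" "gamma * I t k \<le> gamma" using b const_pos by (auto simp: mult_left_le)
  moreover have "0 \<le> eta * Q t k" "eta * Q t k \<le> eta" using b const_pos by (auto simp: mult_left_le)
  moreover have "0 \<le> alpha * V t k" "alpha * V t k \<le> alpha" using b const_pos by (auto simp: mult_left_le)
  moreover have "0 \<le> d * R t k" "d * R t k \<le> d" using b d_pos by (auto simp: mult_left_le)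
  ultimately show ?thesis unfolding fR_eq abs_le_iff by linarith
qed

lemma LipS: assumes k: "k \<in> {1..n}" shows "Lip (\<lambda>t. S t k)"
proof (rule Lip_deriv[where f' = "\<lambda>t. fS t k" and M = "Lam b d Phi k + lam k * Cs + omega + (mu k + d)" and B = 1])
  fix x :: real assume x: "0 \<le> x"
  show "((\<lambda>t. S t k) has_real_derivative fS x k) (at x within {0..})" by (rule dS[OF x k])
  show "\<bar>fS x k\<bar> \<le> Lam b d Phi k + lam k * Cs + omega + (mu k + d)" by (rule fS_bnd[OF x k])
  show "\<bar>S x k\<bar> \<le> 1" using bnd[OF x k] by auto
qed

lemma LipV: assumes k: "k \<in> {1..n}" shows "Lip (\<lambda>t. V t k)"
proof (rule Lip_deriv[where f' = "\<lambda>t. fV t k" and M = "mu k + delta * lam k * Cs + (d + omega + alpha)" and B = 1])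
  fix x :: real assume x: "0 \<le> x"
  show "((\<lambda>t. V t k) has_real_derivative fV x k) (at x within {0..})" by (rule dV[OF x k])
  show "\<bar>fV x k\<bar> \<le> mu k + delta * lam k * Cs + (d + omega + alpha)" by (rule fV_bnd[OF x k])
  show "\<bar>V x k\<bar> \<le> 1" using bnd[OF x k] by auto
qed

lemma LipI: assumes k: "k \<in> {1..n}" shows "Lip (\<lambda>t. I t k)"
proof (rule Lip_deriv[where f' = "\<lambda>t. fI t k" and M = "lam k * Cs + delta * lam k * Cs + D" and B = 1])
  fix x :: real assume x: "0 \<le> x"
  show "((\<lambda>t. I t k) has_real_derivative fI x k) (at x within {0..})" by (rule dI[OF x k])
  show "\<bar>fI x k\<bar> \<le> lam k * Cs + delta * lam k * Cs + D" by (rule fI_bnd[OF x k])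
  show "\<bar>I x k\<bar> \<le> 1" using bnd[OF x k] by auto
qed

lemma Lipth: "Lip th"
proof -
  have e: "th = (\<lambda>t. \<Sum>i=1..n. c i * I t i)" by (rule ext) (simp add: th_c)
  show ?thesis unfolding e by (intro Lip_sum Lip_cmult LipI) auto
qed

end


context sol begin

definition "W t = (\<Sum>k=1..n. c k * (G (Se k) (S t k) + G (Ve k) (V t k) + G (Ie k) (I t k)))"
definition "Wd t = (\<Sum>k=1..n. c k * ((1 - Se k / S t k) * fS t k + (1 - Ve k / V t k) * fV t k + (1 - Ie k / I t k) * fI t k))"
definition "psi t = (\<Sum>k=1..n. c k * (d * (S t k - Se k)^2 + (omega / Se k) * (S t k * Ve k - V t k * Se k)^2))"

lemma dW: assumes t: "t \<ge> 0" shows "(W has_real_derivative Wd t) (at t within {0..})"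
proof -
  have e: "W = (\<lambda>t. \<Sum>k=1..n. c k * (G (Se k) (S t k) + G (Ve k) (V t k) + G (Ie k) (I t k)))"
    by (rule ext) (simp add: W_def)
  show ?thesis unfolding e Wd_def
    by (intro DERIV_sum DERIV_cmult DERIV_add DERIV_G dS[OF t] dV[OF t] dI[OF t]
        posS[OF t] posV[OF t] posI[OF t] Se_pos Ve_pos Ie_pos) auto
qed

lemma Z_zero: assumes t: "t \<ge> 0"
  shows "(\<Sum>k=1..n. c k * (D * Ie k * (th t / ths - I t k / Ie k + (I t k / Ie k) * (ths / th t) - 1))) = 0"
proof -
  have tp: "th t > 0" using th_bnd[OF t] by simp
  have "(\<Sum>k=1..n. c k * (D * Ie k * (th t / ths - I t k / Ie k + (I t k / Ie k) * (ths / th t) - 1)))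
      = (\<Sum>k=1..n. D * (th t / ths - 1) * (c k * Ie k) + D * (ths / th t - 1) * (c k * I t k))"
  proof (rule sum.cong[OF refl])
    fix k assume k: "k \<in> {1..n}"
    show "c k * (D * Ie k * (th t / ths - I t k / Ie k + (I t k / Ie k) * (ths / th t) - 1))
      = D * (th t / ths - 1) * (c k * Ie k) + D * (ths / th t - 1) * (c k * I t k)"
      using Ie_pos[OF k] by (simp add: field_simps)
  qed
  also have "\<dots> = D * (th t / ths - 1) * ths + D * (ths / th t - 1) * th t"
    unfolding sum.distrib ths_c th_c by (simp add: sum_distrib_left)
  also have "\<dots> = 0" using tp ths_pos by (simp add: field_simps)
  finally show ?thesis .
qed

lemma Wd_le: assumes t: "t \<ge> 0" shows "Wd t \<le> - psi t"
proof -
  have "Wd t \<le> (\<Sum>k=1..n. c k * (-(d * (S t k - Se k)^2 + (omega / Se k) * (S t k * Ve k - V t k * Se k)^2)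
        + D * Ie k * (th t / ths - I t k / Ie k + (I t k / Ie k) * (ths / th t) - 1)))"
    unfolding Wd_def
  proof (rule sum_mono)
    fix k assume k: "k \<in> {1..n}"
    have b: "0 < S t k" "S t k < 1" "0 < V t k" "V t k < 1" "0 < I t k" using bnd[OF t k] by auto
    have lk: "lam k > 0" using par_pos k by auto
    have ci: "(1 - Se k / S t k) * fS t k + (1 - Ve k / V t k) * fV t k + (1 - Ie k / I t k) * fI t k
      \<le> -(d * (S t k - Se k)^2 + (omega / Se k) * (S t k * Ve k - V t k * Se k)^2)
        + D * Ie k * (th t / ths - I t k / Ie k + (I t k / Ie k) * (ths / th t) - 1)"
      unfolding fS_eq fV_eq fI_eq
      by (rule class_ineq[OF b(1) b(3) b(5) _ Se_pos[OF k] Ve_pos[OF k] Ie_pos[OF k] ths_pos lk d_pos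
            const_pos(5) const_pos(1) delta(1) _ _ E1[OF k] E2[OF k] E3[OF k]])
         (use th_bnd[OF t] b in auto)
    show "c k * ((1 - Se k / S t k) * fS t k + (1 - Ve k / V t k) * fV t k + (1 - Ie k / I t k) * fI t k)
      \<le> c k * (-(d * (S t k - Se k)^2 + (omega / Se k) * (S t k * Ve k - V t k * Se k)^2)
        + D * Ie k * (th t / ths - I t k / Ie k + (I t k / Ie k) * (ths / th t) - 1))"
      using ci c_pos[OF k] by (intro mult_left_mono) auto
  qed
  also have "\<dots> = (\<Sum>k=1..n. - (c k * (d * (S t k - Se k)^2 + (omega / Se k) * (S t k * Ve k - V t k * Se k)^2))
        + c k * (D * Ie k * (th t / ths - I t k / Ie k + (I t k / Ie k) * (ths / th t) - 1)))"
    by (rule sum.cong[OF refl]) (simp only: distrib_left mult_minus_right)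
  also have "\<dots> = - psi t + (\<Sum>k=1..n. c k * (D * Ie k * (th t / ths - I t k / Ie k + (I t k / Ie k) * (ths / th t) - 1)))"
    unfolding psi_def by (simp only: sum.distrib sum_negf)
  also have "\<dots> = - psi t" using Z_zero[OF t] by simp
  finally show ?thesis .
qed

lemma psi_term_nonneg: assumes k: "k \<in> {1..n}"
  shows "0 \<le> c k * (d * (S t k - Se k)^2 + (omega / Se k) * (S t k * Ve k - V t k * Se k)^2)"
proof -
  have "0 \<le> d * (S t k - Se k)^2" "0 \<le> (omega / Se k) * (S t k * Ve k - V t k * Se k)^2"
    using d_pos const_pos Se_pos[OF k] by auto
  thus ?thesis using c_pos[OF k] by simp
qed

lemma psi_nonneg: "t \<ge> 0 \<Longrightarrow> psi t \<ge> 0"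
  unfolding psi_def using psi_term_nonneg by (intro sum_nonneg) auto

lemma W_nonneg: "t \<ge> 0 \<Longrightarrow> W t \<ge> 0"
  unfolding W_def using c_pos Se_pos Ve_pos Ie_pos posS posV posI
  by (intro sum_nonneg mult_nonneg_nonneg add_nonneg_nonneg G_nonneg) (auto intro: less_imp_le)

lemma W_mono: assumes st: "0 \<le> s" "s \<le> t" shows "W t \<le> W s"
proof (rule deriv_antimono[OF st, where f' = Wd])
  fix x assume "s \<le> x" "x \<le> t"
  hence "x \<ge> 0" using st by simp
  thus "(W has_real_derivative Wd x) (at x within {0..})" by (rule dW)
next
  fix x assume "s < x" "x < t"
  hence "x \<ge> 0" using st by simp
  thus "Wd x \<le> 0" using Wd_le[of x] psi_nonneg[of x] by simp
qed

lemma W_cauchy: "\<forall>\<eta>>0. \<exists>T. \<forall>s\<ge>T. \<forall>t\<ge>T. \<bar>W s - W t\<bar> < \<eta>"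
proof (intro allI impI)
  fix \<eta> :: real assume \<eta>: "\<eta> > 0"
  define m where "m = Inf (W ` {0..})"
  have ne: "W ` {0..} \<noteq> {}" by auto
  have bb: "bdd_below (W ` {0..})" using W_nonneg by (intro bdd_belowI[of _ 0]) auto
  have "m < m + \<eta>" using \<eta> by simp
  then obtain T where T: "T \<ge> 0" "W T < m + \<eta>" unfolding m_def cInf_less_iff[OF ne bb] by auto
  have lo: "m \<le> W s" if "s \<ge> 0" for s unfolding m_def using that bb by (intro cInf_lower) auto
  show "\<exists>T. \<forall>s\<ge>T. \<forall>t\<ge>T. \<bar>W s - W t\<bar> < \<eta>"
  proof (rule exI[of _ T], intro allI impI)
    fix s t assume s: "s \<ge> T" and t: "t \<ge> T"
    have "W s \<le> W T" "W t \<le> W T" using W_mono T s t by auto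
    moreover have "m \<le> W s" "m \<le> W t" using lo T s t by auto
    ultimately show "\<bar>W s - W t\<bar> < \<eta>" using T by (simp add: abs_less_iff)
  qed
qed

lemma Lip_psi: "Lip psi"
proof -
  have e: "psi = (\<lambda>t. \<Sum>k=1..n. c k * (d * ((S t k - Se k) * (S t k - Se k))
        + (omega / Se k) * ((S t k * Ve k - V t k * Se k) * (S t k * Ve k - V t k * Se k))))"
    by (rule ext) (simp add: psi_def power2_eq_square)
  show ?thesis unfolding e
    by (intro Lip_sum Lip_add Lip_diff Lip_mult Lip_const LipS LipV finite_atLeastAtMost) auto
qed

lemma psi_lim: "(psi \<longlongrightarrow> 0) at_top"
  by (rule barbalat[OF W_cauchy dW Wd_le psi_nonneg Lip_psi])

lemma psi_ge: assumes t: "t \<ge> 0" and k: "k \<in> {1..n}"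
  shows "c k * (d * (S t k - Se k)^2 + (omega / Se k) * (S t k * Ve k - V t k * Se k)^2) \<le> psi t"
  unfolding psi_def
  by (rule member_le_sum[of k, OF k]) (use psi_term_nonneg in auto)

lemma S_conv: assumes k: "k \<in> {1..n}" shows "((\<lambda>t. S t k) \<longlongrightarrow> Se k) at_top"
proof (rule LIM_zero_cancel, rule sq_to_zero[OF _ _ psi_lim])
  fix t :: real assume t: "t \<ge> 0"
  have ck: "c k > 0" using c_pos[OF k] .
  have "c k * d * (S t k - Se k)^2 \<le> c k * (d * (S t k - Se k)^2 + (omega / Se k) * (S t k * Ve k - V t k * Se k)^2)"
    using ck Se_pos[OF k] const_pos by (simp add: distrib_left)
  also have "\<dots> \<le> psi t" by (rule psi_ge[OF t k])
  finally have "c k * d * (S t k - Se k)^2 \<le> psi t" .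
  thus "(S t k - Se k)^2 \<le> (1 / (c k * d)) * psi t" using ck d_pos by (simp add: field_simps)
next
  show "1 / (c k * d) > 0" using c_pos[OF k] d_pos by simp
qed

lemma V_conv: assumes k: "k \<in> {1..n}" shows "((\<lambda>t. V t k) \<longlongrightarrow> Ve k) at_top"
proof -
  have sp: "Se k > 0" using Se_pos[OF k] .
  have z: "((\<lambda>t. S t k * Ve k - V t k * Se k) \<longlongrightarrow> 0) at_top"
  proof (rule sq_to_zero[OF _ _ psi_lim])
    fix t :: real assume t: "t \<ge> 0"
    have ck: "c k > 0" using c_pos[OF k] .
    have "c k * (d * (S t k - Se k)^2 + (omega / Se k) * (S t k * Ve k - V t k * Se k)^2)
        = c k * (d * (S t k - Se k)^2) + c k * (omega / Se k) * (S t k * Ve k - V t k * Se k)^2"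
      by (simp only: distrib_left mult.assoc)
    moreover have "0 \<le> c k * (d * (S t k - Se k)^2)" using ck d_pos by simp
    ultimately have "c k * (omega / Se k) * (S t k * Ve k - V t k * Se k)^2 \<le> c k * (d * (S t k - Se k)^2 + (omega / Se k) * (S t k * Ve k - V t k * Se k)^2)"
      by linarith
    also have "\<dots> \<le> psi t" by (rule psi_ge[OF t k])
    finally have "c k * (omega / Se k) * (S t k * Ve k - V t k * Se k)^2 \<le> psi t" .
    thus "(S t k * Ve k - V t k * Se k)^2 \<le> (Se k / (c k * omega)) * psi t" using ck const_pos sp
      by (simp add: field_simps)
  next
    show "Se k / (c k * omega) > 0" using c_pos[OF k] const_pos sp by simp
  qed
  have "((\<lambda>t. (S t k * Ve k - (S t k * Ve k - V t k * Se k)) / Se k) \<longlongrightarrow> (Se k * Ve k - 0) / Se k) at_top"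
    by (intro tendsto_intros S_conv[OF k] z) (use sp in simp)
  moreover have "(\<lambda>t. (S t k * Ve k - (S t k * Ve k - V t k * Se k)) / Se k) = (\<lambda>t. V t k)"
    using sp by (auto simp: field_simps)
  ultimately show ?thesis using sp by simp
qed

lemma one_in: "1 \<in> {1..n}" using n_ge by simp

lemma th_conv: "(th \<longlongrightarrow> ths) at_top"
proof -
  define z where "z t = lam 1 * S t 1 * (ths - th t)" for t
  define e where "e t = Lam b d Phi 1 - lam 1 * S t 1 * ths + omega * V t 1 - (mu 1 + d) * S t 1" for t
  have z0: "(z \<longlongrightarrow> 0) at_top"
  proof (rule lip_zero[OF conv_cauchy[OF S_conv[OF one_in]], where w = "\<lambda>t. fS t 1" and e = e])
    show "\<And>x. x \<ge> 0 \<Longrightarrow> ((\<lambda>t. S t 1) has_real_derivative fS x 1) (at x within {0..})"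
      using dS one_in by auto
    show "\<And>x. x \<ge> 0 \<Longrightarrow> fS x 1 = z x + e x"
      unfolding z_def e_def fS_eq by (simp add: algebra_simps)
    have "(e \<longlongrightarrow> Lam b d Phi 1 - lam 1 * Se 1 * ths + omega * Ve 1 - (mu 1 + d) * Se 1) at_top"
      unfolding e_def by (intro tendsto_intros S_conv[OF one_in] V_conv[OF one_in])
    thus "(e \<longlongrightarrow> 0) at_top" using E1[OF one_in] by simp
    have ez: "z = (\<lambda>t. lam 1 * S t 1 * (ths - th t))" by (rule ext) (simp add: z_def)
    show "Lip z" unfolding ez by (intro Lip_mult Lip_diff Lip_const LipS[OF one_in] Lipth)
  qed
  have sp: "Se 1 > 0" "lam 1 > 0" using Se_pos[OF one_in] par_pos one_in by auto
  have "((\<lambda>t. ths - z t / (lam 1 * S t 1)) \<longlongrightarrow> ths - 0 / (lam 1 * Se 1)) at_top"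
    by (intro tendsto_intros z0 S_conv[OF one_in]) (use sp in simp)
  hence "((\<lambda>t. ths - z t / (lam 1 * S t 1)) \<longlongrightarrow> ths) at_top" by simp
  moreover have "eventually (\<lambda>t. ths - z t / (lam 1 * S t 1) = th t) at_top"
    unfolding eventually_at_top_linorder
  proof (intro exI[of _ 0] allI impI)
    fix t :: real assume t: "t \<ge> 0"
    have "S t 1 > 0" using posS[OF t one_in] .
    thus "ths - z t / (lam 1 * S t 1) = th t" unfolding z_def using sp by (simp add: field_simps)
  qed
  ultimately show ?thesis by (rule Lim_transform_eventually)
qed

lemma I_conv: assumes k: "k \<in> {1..n}" shows "((\<lambda>t. I t k) \<longlongrightarrow> Ie k) at_top"
proof (rule LIM_zero_cancel, rule lin_conv[OF D_pos, where g' = "\<lambda>t. fI t k"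
    and e = "\<lambda>t. lam k * S t k * th t + delta * lam k * V t k * th t - D * Ie k"])
  fix x :: real assume x: "0 \<le> x"
  show "((\<lambda>t. I t k - Ie k) has_real_derivative fI x k) (at x within {0..})"
    using DERIV_diff[OF dI[OF x k] DERIV_const[of "Ie k"]] by simp
  show "fI x k = - D * (I x k - Ie k) + (lam k * S x k * th x + delta * lam k * V x k * th x - D * Ie k)"
    unfolding fI_eq by (simp add: algebra_simps)
next
  have "((\<lambda>t. lam k * S t k * th t + delta * lam k * V t k * th t - D * Ie k) \<longlongrightarrow>
      lam k * Se k * ths + delta * lam k * Ve k * ths - D * Ie k) at_top"
    by (intro tendsto_intros S_conv[OF k] V_conv[OF k] th_conv)
  thus "((\<lambda>t. lam k * S t k * th t + delta * lam k * V t k * th t - D * Ie k) \<longlongrightarrow> 0) at_top"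
    using E3[OF k] by simp
qed

lemma Q_conv: assumes k: "k \<in> {1..n}" shows "((\<lambda>t. Q t k) \<longlongrightarrow> Qe k) at_top"
proof (rule LIM_zero_cancel, rule lin_conv[where m = "eta + d", where g' = "\<lambda>t. fQ t k"
    and e = "\<lambda>t. beta * I t k - (eta + d) * Qe k"])
  show "eta + d > 0" using const_pos d_pos by simp
  fix x :: real assume x: "0 \<le> x"
  show "((\<lambda>t. Q t k - Qe k) has_real_derivative fQ x k) (at x within {0..})"
    using DERIV_diff[OF dQ[OF x k] DERIV_const[of "Qe k"]] by simp
  show "fQ x k = - (eta + d) * (Q x k - Qe k) + (beta * I x k - (eta + d) * Qe k)"
    unfolding fQ_eq by (simp add: algebra_simps)
next
  have "((\<lambda>t. beta * I t k - (eta + d) * Qe k) \<longlongrightarrow> beta * Ie k - (eta + d) * Qe k) at_top"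
    by (intro tendsto_intros I_conv[OF k])
  thus "((\<lambda>t. beta * I t k - (eta + d) * Qe k) \<longlongrightarrow> 0) at_top" using E4[OF k] by simp
qed

lemma R_conv: assumes k: "k \<in> {1..n}" shows "((\<lambda>t. R t k) \<longlongrightarrow> Rst k) at_top"
proof (rule LIM_zero_cancel, rule lin_conv[OF d_pos, where g' = "\<lambda>t. fR t k"
    and e = "\<lambda>t. gamma * I t k + eta * Q t k + alpha * V t k - d * Rst k"])
  fix x :: real assume x: "0 \<le> x"
  show "((\<lambda>t. R t k - Rst k) has_real_derivative fR x k) (at x within {0..})"
    using DERIV_diff[OF dR[OF x k] DERIV_const[of "Rst k"]] by simp
  show "fR x k = - d * (R x k - Rst k) + (gamma * I x k + eta * Q x k + alpha * V x k - d * Rst k)"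
    unfolding fR_eq by (simp add: algebra_simps)
next
  have "((\<lambda>t. gamma * I t k + eta * Q t k + alpha * V t k - d * Rst k) \<longlongrightarrow>
      gamma * Ie k + eta * Qe k + alpha * Ve k - d * Rst k) at_top"
    by (intro tendsto_intros I_conv[OF k] Q_conv[OF k] V_conv[OF k])
  thus "((\<lambda>t. gamma * I t k + eta * Q t k + alpha * V t k - d * Rst k) \<longlongrightarrow> 0) at_top" using E5[OF k] by simp
qed

end


lemma G_small:
  assumes e: "0 < e" "e \<le> a" and x: "0 < x" and xa: "\<bar>x - a\<bar> \<le> s" "s < e/2" "s \<le> 1"
  shows "G a x \<le> (2/e) * \<bar>x - a\<bar>"
proof -
  have a: "a > 0" using e by simp
  have xe: "x \<ge> e/2" using xa e by (auto simp: abs_le_iff)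
  have "G a x \<le> (x-a)^2/x" by (rule G_upper[OF a x])
  also have "(x-a)^2 = \<bar>x-a\<bar> * \<bar>x-a\<bar>" by (simp add: power2_eq_square abs_mult[symmetric])
  also have "\<dots> \<le> \<bar>x-a\<bar> * 1" using xa by (intro mult_left_mono) auto
  finally have "G a x \<le> \<bar>x-a\<bar> / x" using x by (simp add: divide_right_mono)
  also have "\<dots> \<le> \<bar>x-a\<bar> / (e/2)" using xe e by (intro divide_left_mono) auto
  also have "\<dots> = (2/e) * \<bar>x - a\<bar>" by simp
  finally show ?thesis .
qed

context sviqr begin

definition "cmin = Min (c ` {1..n})"
definition "emin = Min ((\<lambda>k. min (Se k) (min (Ve k) (Ie k))) ` {1..n})"
definition "K1 = 2 * Cs / emin"
definition "K2 = 4 * K1 / cmin"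
definition "rho s = sqrt (K2 * s)"
definition "Fb s = real n * (3 * rho s + (s + beta * rho s / (eta + d))
    + (s + (gamma * rho s + eta * (s + beta * rho s / (eta + d)) + alpha * rho s) / d))"

lemma cmin: "cmin > 0" "k \<in> {1..n} \<Longrightarrow> cmin \<le> c k"
proof -
  have ne: "c ` {1..n} \<noteq> {}" using n_ge by auto
  show "cmin > 0" unfolding cmin_def using ne c_pos by (subst Min_gr_iff) auto
  show "k \<in> {1..n} \<Longrightarrow> cmin \<le> c k" unfolding cmin_def by (intro Min_le) auto
qed

lemma emin: "emin > 0" "k \<in> {1..n} \<Longrightarrow> emin \<le> Se k \<and> emin \<le> Ve k \<and> emin \<le> Ie k"
proof -
  have ne: "(\<lambda>k. min (Se k) (min (Ve k) (Ie k))) ` {1..n} \<noteq> {}" using n_ge by auto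
  show "emin > 0" unfolding emin_def using ne Se_pos Ve_pos Ie_pos by (subst Min_gr_iff) auto
  assume k: "k \<in> {1..n}"
  have "emin \<le> min (Se k) (min (Ve k) (Ie k))" unfolding emin_def using k by (intro Min_le) auto
  thus "emin \<le> Se k \<and> emin \<le> Ve k \<and> emin \<le> Ie k" by simp
qed

lemma Cs_pos': "Cs > 0" unfolding Cs_def using c_pos n_ge by (intro sum_pos) auto

lemma c_le_Cs: "k \<in> {1..n} \<Longrightarrow> c k \<le> Cs"
  unfolding Cs_def by (rule member_le_sum) (use c_pos in \<open>auto intro: less_imp_le\<close>)

lemma K2_pos: "K2 > 0" unfolding K2_def K1_def using Cs_pos' emin cmin by simp

lemma Fb_small: assumes \<epsilon>: "\<epsilon> > 0"
  shows "\<exists>\<delta>>0. \<forall>s. 0 \<le> s \<longrightarrow> s < \<delta> \<longrightarrow> s < emin/2 \<and> s \<le> 1 \<and> Fb s < \<epsilon>"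
proof -
  have ed: "eta + d > 0" using const_pos d_pos by simp
  define Kx where "Kx = real n * (3 + (1 + beta / (eta + d)) + (1 + (gamma + eta * (1 + beta / (eta + d)) + alpha) / d))"
  have q1: "beta / (eta + d) > 0" using const_pos ed by simp
  have q2: "eta * (1 + beta / (eta + d)) > 0" using q1 const_pos by simp
  have q3: "(gamma + eta * (1 + beta / (eta + d)) + alpha) / d > 0" using q2 const_pos d_pos by simp
  have q4: "real n > 0" using n_ge by simp
  have "3 + (1 + beta / (eta + d)) + (1 + (gamma + eta * (1 + beta / (eta + d)) + alpha) / d) > 0"
    using q1 q3 by linarith
  hence Kx: "Kx > 0" unfolding Kx_def using q4 by simp
  define \<tau> where "\<tau> = \<epsilon> / (2 * Kx)"
  have \<tau>: "\<tau> > 0" unfolding \<tau>_def using \<epsilon> Kx by simp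
  define \<delta> where "\<delta> = min (min (emin/2) 1) (min \<tau> (\<tau>^2 / K2))"
  have \<delta>: "\<delta> > 0" unfolding \<delta>_def using \<tau> K2_pos emin by simp
  show ?thesis
  proof (intro exI[of _ \<delta>] conjI allI impI)
    show "\<delta> > 0" by (rule \<delta>)
    fix s assume s: "0 \<le> s" "s < \<delta>"
    show "s < emin/2" "s \<le> 1" using s unfolding \<delta>_def by auto
    have st: "s \<le> \<tau>" using s unfolding \<delta>_def by auto
    have "K2 * s \<le> \<tau>^2" using s K2_pos unfolding \<delta>_def by (simp add: field_simps)
    hence "rho s \<le> sqrt (\<tau>^2)" unfolding rho_def by (rule real_sqrt_le_mono)
    hence rt: "rho s \<le> \<tau>" using \<tau> by simp
    have r0: "rho s \<ge> 0" unfolding rho_def using K2_pos s by simp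
    have a: "beta * rho s / (eta + d) \<le> beta * \<tau> / (eta + d)"
      using rt ed const_pos by (intro divide_right_mono mult_left_mono) auto
    have b: "eta * (s + beta * rho s / (eta + d)) \<le> eta * (\<tau> + beta * \<tau> / (eta + d))"
      using a st const_pos by (intro mult_left_mono) auto
    have c1: "gamma * rho s \<le> gamma * \<tau>" "alpha * rho s \<le> alpha * \<tau>" using rt const_pos by auto
    have c: "(gamma * rho s + eta * (s + beta * rho s / (eta + d)) + alpha * rho s) / d
        \<le> (gamma * \<tau> + eta * (\<tau> + beta * \<tau> / (eta + d)) + alpha * \<tau>) / d"
      using b c1 d_pos by (intro divide_right_mono) auto
    have "3 * rho s + (s + beta * rho s / (eta + d))
        + (s + (gamma * rho s + eta * (s + beta * rho s / (eta + d)) + alpha * rho s) / d)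
      \<le> 3 * \<tau> + (\<tau> + beta * \<tau> / (eta + d)) + (\<tau> + (gamma * \<tau> + eta * (\<tau> + beta * \<tau> / (eta + d)) + alpha * \<tau>) / d)"
      using a c rt st by linarith
    hence "Fb s \<le> real n * (3 * \<tau> + (\<tau> + beta * \<tau> / (eta + d)) + (\<tau> + (gamma * \<tau> + eta * (\<tau> + beta * \<tau> / (eta + d)) + alpha * \<tau>) / d))"
      unfolding Fb_def by (intro mult_left_mono) auto
    also have "\<dots> = \<tau> * Kx" unfolding Kx_def using ed d_pos by (simp add: field_simps)
    also have "\<dots> = \<epsilon>/2" unfolding \<tau>_def using Kx by simp
    finally show "Fb s < \<epsilon>" using \<epsilon> by simp
  qed
qed

end

context sol begin

definition "s0 = sdist n (S 0) (V 0) (I 0) (Q 0) (R 0) Se Ve Ie Qe Rst"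

lemma s0_ge: assumes k: "k \<in> {1..n}"
  shows "\<bar>S 0 k - Se k\<bar> + \<bar>V 0 k - Ve k\<bar> + \<bar>I 0 k - Ie k\<bar> + \<bar>Q 0 k - Qe k\<bar> + \<bar>R 0 k - Rst k\<bar> \<le> s0"
  unfolding s0_def sdist_def by (rule member_le_sum[OF k]) auto

lemma s0_nonneg: "s0 \<ge> 0" unfolding s0_def sdist_def by (intro sum_nonneg) auto

lemma W0_bound: assumes sm: "s0 < emin/2" "s0 \<le> 1" shows "W 0 \<le> K1 * s0"
proof -
  have "W 0 \<le> (\<Sum>k=1..n. Cs * ((2/emin) * (\<bar>S 0 k - Se k\<bar> + \<bar>V 0 k - Ve k\<bar> + \<bar>I 0 k - Ie k\<bar> + \<bar>Q 0 k - Qe k\<bar> + \<bar>R 0 k - Rst k\<bar>)))"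
    unfolding W_def
  proof (rule sum_mono)
    fix k assume k: "k \<in> {1..n}"
    have sk: "\<bar>S 0 k - Se k\<bar> \<le> s0" "\<bar>V 0 k - Ve k\<bar> \<le> s0" "\<bar>I 0 k - Ie k\<bar> \<le> s0" "\<bar>Q 0 k - Qe k\<bar> \<ge> 0" "\<bar>R 0 k - Rst k\<bar> \<ge> 0"
      using s0_ge[OF k] by auto
    have em: "emin > 0" "emin \<le> Se k" "emin \<le> Ve k" "emin \<le> Ie k" using emin emin(2)[OF k] by auto
    have g1: "G (Se k) (S 0 k) \<le> (2/emin) * \<bar>S 0 k - Se k\<bar>"
      by (rule G_small[OF em(1) em(2) _ sk(1) sm]) (use init[OF k] in simp)
    have g2: "G (Ve k) (V 0 k) \<le> (2/emin) * \<bar>V 0 k - Ve k\<bar>"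
      by (rule G_small[OF em(1) em(3) _ sk(2) sm]) (use init[OF k] in simp)
    have g3: "G (Ie k) (I 0 k) \<le> (2/emin) * \<bar>I 0 k - Ie k\<bar>"
      by (rule G_small[OF em(1) em(4) _ sk(3) sm]) (use init[OF k] in simp)
    have gn: "G (Se k) (S 0 k) \<ge> 0" "G (Ve k) (V 0 k) \<ge> 0" "G (Ie k) (I 0 k) \<ge> 0"
      using G_nonneg Se_pos[OF k] Ve_pos[OF k] Ie_pos[OF k] init[OF k] by auto
    have q: "0 \<le> (2/emin) * \<bar>Q 0 k - Qe k\<bar>" "0 \<le> (2/emin) * \<bar>R 0 k - Rst k\<bar>" using em by auto
    have "G (Se k) (S 0 k) + G (Ve k) (V 0 k) + G (Ie k) (I 0 k)
        \<le> (2/emin) * (\<bar>S 0 k - Se k\<bar> + \<bar>V 0 k - Ve k\<bar> + \<bar>I 0 k - Ie k\<bar> + \<bar>Q 0 k - Qe k\<bar> + \<bar>R 0 k - Rst k\<bar>)"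
      using g1 g2 g3 q by (simp add: distrib_left)
    moreover have "0 \<le> G (Se k) (S 0 k) + G (Ve k) (V 0 k) + G (Ie k) (I 0 k)" using gn by simp
    ultimately show "c k * (G (Se k) (S 0 k) + G (Ve k) (V 0 k) + G (Ie k) (I 0 k))
        \<le> Cs * ((2/emin) * (\<bar>S 0 k - Se k\<bar> + \<bar>V 0 k - Ve k\<bar> + \<bar>I 0 k - Ie k\<bar> + \<bar>Q 0 k - Qe k\<bar> + \<bar>R 0 k - Rst k\<bar>))"
      using c_le_Cs[OF k] c_pos[OF k] by (intro mult_mono) auto
  qed
  also have "\<dots> = K1 * s0" unfolding s0_def sdist_def K1_def sum_distrib_left by (rule sum.cong[OF refl]) (simp add: field_simps)
  finally show ?thesis .
qed

lemma G_le_W: assumes t: "t \<ge> 0" and k: "k \<in> {1..n}"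
  shows "c k * G (Se k) (S t k) \<le> W t" "c k * G (Ve k) (V t k) \<le> W t" "c k * G (Ie k) (I t k) \<le> W t"
proof -
  have gn: "G (Se k) (S t k) \<ge> 0" "G (Ve k) (V t k) \<ge> 0" "G (Ie k) (I t k) \<ge> 0"
    using G_nonneg Se_pos[OF k] Ve_pos[OF k] Ie_pos[OF k] bnd[OF t k] by auto
  have tn: "\<And>j. j \<in> {1..n} \<Longrightarrow> 0 \<le> c j * (G (Se j) (S t j) + G (Ve j) (V t j) + G (Ie j) (I t j))"
    using G_nonneg Se_pos Ve_pos Ie_pos bnd[OF t] c_pos
    by (intro mult_nonneg_nonneg add_nonneg_nonneg) (auto intro: less_imp_le)
  have m: "c k * (G (Se k) (S t k) + G (Ve k) (V t k) + G (Ie k) (I t k)) \<le> W t"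
    unfolding W_def by (rule member_le_sum[OF k]) (use tn in auto)
  have cp: "c k > 0" using c_pos[OF k] .
  show "c k * G (Se k) (S t k) \<le> W t" using m gn cp by (smt (verit) distrib_left mult_nonneg_nonneg)
  show "c k * G (Ve k) (V t k) \<le> W t" using m gn cp by (smt (verit) distrib_left mult_nonneg_nonneg)
  show "c k * G (Ie k) (I t k) \<le> W t" using m gn cp by (smt (verit) distrib_left mult_nonneg_nonneg)
qed

lemma dev_gen:
  assumes t: "t \<ge> 0" and k: "k \<in> {1..n}" and sm: "s0 < emin/2" "s0 \<le> 1"
    and a: "0 < a" "a \<le> 1" and x: "0 < x" "x \<le> 1" and cg: "c k * G a x \<le> W t"
  shows "\<bar>x - a\<bar> \<le> rho s0"
proof -
  have "W t \<le> W 0" using W_mono t by simp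
  also have "\<dots> \<le> K1 * s0" by (rule W0_bound[OF sm])
  finally have "c k * G a x \<le> K1 * s0" using cg by simp
  moreover have "cmin * G a x \<le> c k * G a x" using cmin(2)[OF k] G_nonneg[OF a(1) x(1)] by (intro mult_right_mono) auto
  ultimately have "G a x \<le> K1 * s0 / cmin" using cmin(1) by (simp add: field_simps)
  hence "(x - a)^2 \<le> 4 * (K1 * s0 / cmin)" using G_lower[OF a(1) x(1) a(2) x(2)] by simp
  also have "\<dots> = K2 * s0" unfolding K2_def by simp
  finally have "sqrt ((x-a)^2) \<le> sqrt (K2 * s0)" by (rule real_sqrt_le_mono)
  thus ?thesis unfolding rho_def by simp
qed

lemma devS: "t \<ge> 0 \<Longrightarrow> k \<in> {1..n} \<Longrightarrow> s0 < emin/2 \<Longrightarrow> s0 \<le> 1 \<Longrightarrow> \<bar>S t k - Se k\<bar> \<le> rho s0"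
  by (rule dev_gen[OF _ _ _ _ Se_pos _ _ _ G_le_W(1)]; use E_le1 bnd in \<open>force\<close>)
lemma devV: "t \<ge> 0 \<Longrightarrow> k \<in> {1..n} \<Longrightarrow> s0 < emin/2 \<Longrightarrow> s0 \<le> 1 \<Longrightarrow> \<bar>V t k - Ve k\<bar> \<le> rho s0"
  by (rule dev_gen[OF _ _ _ _ Ve_pos _ _ _ G_le_W(2)]; use E_le1 bnd in \<open>force\<close>)
lemma devI: "t \<ge> 0 \<Longrightarrow> k \<in> {1..n} \<Longrightarrow> s0 < emin/2 \<Longrightarrow> s0 \<le> 1 \<Longrightarrow> \<bar>I t k - Ie k\<bar> \<le> rho s0"
  by (rule dev_gen[OF _ _ _ _ Ie_pos _ _ _ G_le_W(3)]; use E_le1 bnd in \<open>force\<close>)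

lemma devQ: assumes t: "t \<ge> 0" and k: "k \<in> {1..n}" and sm: "s0 < emin/2" "s0 \<le> 1"
  shows "\<bar>Q t k - Qe k\<bar> \<le> s0 + beta * rho s0 / (eta + d)"
proof -
  have ed: "eta + d > 0" using const_pos d_pos by simp
  have "\<bar>Q t k - Qe k\<bar> \<le> \<bar>Q 0 k - Qe k\<bar> + (beta * rho s0) / (eta + d)"
  proof (rule lin_bound[OF ed t, where g' = "\<lambda>t. fQ t k" and e = "\<lambda>t. beta * (I t k - Ie k)"])
    fix x :: real assume x: "0 \<le> x"
    show "((\<lambda>t. Q t k - Qe k) has_real_derivative fQ x k) (at x within {0..})"
      using DERIV_diff[OF dQ[OF x k] DERIV_const[of "Qe k"]] by simp
    show "fQ x k = - (eta + d) * (Q x k - Qe k) + beta * (I x k - Ie k)"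
      unfolding fQ_eq using E4[OF k] by (simp add: algebra_simps)
    show "\<bar>beta * (I x k - Ie k)\<bar> \<le> beta * rho s0"
      using devI[OF x k sm] const_pos by (simp add: abs_mult mult_left_mono)
  qed
  moreover have "\<bar>Q 0 k - Qe k\<bar> \<le> s0" using s0_ge[OF k] by simp
  ultimately show ?thesis by simp
qed

lemma devR: assumes t: "t \<ge> 0" and k: "k \<in> {1..n}" and sm: "s0 < emin/2" "s0 \<le> 1"
  shows "\<bar>R t k - Rst k\<bar> \<le> s0 + (gamma * rho s0 + eta * (s0 + beta * rho s0 / (eta + d)) + alpha * rho s0) / d"
proof -
  have "\<bar>R t k - Rst k\<bar> \<le> \<bar>R 0 k - Rst k\<bar> + (gamma * rho s0 + eta * (s0 + beta * rho s0 / (eta + d)) + alpha * rho s0) / d"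
  proof (rule lin_bound[OF d_pos t, where g' = "\<lambda>t. fR t k"
      and e = "\<lambda>t. gamma * (I t k - Ie k) + eta * (Q t k - Qe k) + alpha * (V t k - Ve k)"])
    fix x :: real assume x: "0 \<le> x"
    show "((\<lambda>t. R t k - Rst k) has_real_derivative fR x k) (at x within {0..})"
      using DERIV_diff[OF dR[OF x k] DERIV_const[of "Rst k"]] by simp
    show "fR x k = - d * (R x k - Rst k) + (gamma * (I x k - Ie k) + eta * (Q x k - Qe k) + alpha * (V x k - Ve k))"
      unfolding fR_eq using E5[OF k] by (simp add: algebra_simps)
    have a1: "\<bar>gamma * (I x k - Ie k)\<bar> \<le> gamma * rho s0"
      using devI[OF x k sm] const_pos by (simp add: abs_mult mult_left_mono)
    have a2: "\<bar>eta * (Q x k - Qe k)\<bar> \<le> eta * (s0 + beta * rho s0 / (eta + d))"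
      using devQ[OF x k sm] const_pos by (simp add: abs_mult mult_left_mono)
    have a3: "\<bar>alpha * (V x k - Ve k)\<bar> \<le> alpha * rho s0"
      using devV[OF x k sm] const_pos by (simp add: abs_mult mult_left_mono)
    show "\<bar>gamma * (I x k - Ie k) + eta * (Q x k - Qe k) + alpha * (V x k - Ve k)\<bar>
        \<le> gamma * rho s0 + eta * (s0 + beta * rho s0 / (eta + d)) + alpha * rho s0"
      using a1 a2 a3 by (smt (verit) abs_triangle_ineq)
  qed
  moreover have "\<bar>R 0 k - Rst k\<bar> \<le> s0" using s0_ge[OF k] by simp
  ultimately show ?thesis by simp
qed

lemma stab_bound: assumes t: "t \<ge> 0" and sm: "s0 < emin/2" "s0 \<le> 1"
  shows "sdist n (S t) (V t) (I t) (Q t) (R t) Se Ve Ie Qe Rst \<le> Fb s0"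
proof -
  have "sdist n (S t) (V t) (I t) (Q t) (R t) Se Ve Ie Qe Rst \<le> (\<Sum>k=1..n. 3 * rho s0 + (s0 + beta * rho s0 / (eta + d))
    + (s0 + (gamma * rho s0 + eta * (s0 + beta * rho s0 / (eta + d)) + alpha * rho s0) / d))"
    unfolding sdist_def
  proof (rule sum_mono)
    fix k assume k: "k \<in> {1..n}"
    show "\<bar>S t k - Se k\<bar> + \<bar>V t k - Ve k\<bar> + \<bar>I t k - Ie k\<bar> + \<bar>Q t k - Qe k\<bar> + \<bar>R t k - Rst k\<bar>
      \<le> 3 * rho s0 + (s0 + beta * rho s0 / (eta + d))
        + (s0 + (gamma * rho s0 + eta * (s0 + beta * rho s0 / (eta + d)) + alpha * rho s0) / d)"
      using devS[OF t k sm] devV[OF t k sm] devI[OF t k sm] devQ[OF t k sm] devR[OF t k sm] by linarith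
  qed
  also have "\<dots> = Fb s0" unfolding Fb_def by simp
  finally show ?thesis .
qed

end


theorem theorem4p5:
  fixes n :: nat and p lam phi mu :: "nat \<Rightarrow> real"
    and b d Phi alpha beta gamma eta omega delta :: real
    and Se Ve Ie Qe Rst :: "nat \<Rightarrow> real"
  assumes n_ge: "n \<ge> 1"
    and p_pos: "\<forall>k\<in>{1..n}. p k > 0"
    and p_sum: "(\<Sum>k=1..n. p k) = 1"
    and bd: "b > d" and d_pos: "d > 0"
    and Phi_pos: "Phi > 0"
    and Phi_eq: "Phi = (1 / avgdeg n p) *
                   (\<Sum>i=1..n. real i * p i * b * Phi / (d + b * real i * Phi))"
    and par_pos: "\<forall>k\<in>{1..n}. lam k > 0 \<and> phi k > 0 \<and> mu k > 0"
    and const_pos: "alpha > 0" "beta > 0" "gamma > 0" "eta > 0" "omega > 0"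
    and delta: "0 \<le> delta" "delta \<le> 1"
    and R0_gt: "R0 n p lam phi mu b d Phi alpha beta gamma omega delta > 1"
    and Eq: "is_endemic_equilibrium n p lam phi mu b d Phi alpha beta gamma eta omega delta
               Se Ve Ie Qe Rst"
  shows
    \<comment> \<open>Lyapunov stability (relative to the admissible region)\<close>
    "(\<forall>\<epsilon>>0. \<exists>\<delta>>0. \<forall>S V I Q R.
        is_solution n p lam phi mu b d Phi alpha beta gamma eta omega delta S V I Q R \<and>
        admissible_init n b d Phi (S 0) (V 0) (I 0) (Q 0) (R 0) \<and>
        sdist n (S 0) (V 0) (I 0) (Q 0) (R 0) Se Ve Ie Qe Rst < \<delta> \<longrightarrow>
        (\<forall>t\<ge>0. sdist n (S t) (V t) (I t) (Q t) (R t) Se Ve Ie Qe Rst < \<epsilon>))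
     \<and>
     \<comment> \<open>global attractivity\<close>
     (\<forall>S V I Q R.
        is_solution n p lam phi mu b d Phi alpha beta gamma eta omega delta S V I Q R \<and>
        admissible_init n b d Phi (S 0) (V 0) (I 0) (Q 0) (R 0) \<longrightarrow>
        (\<forall>k\<in>{1..n}. ((\<lambda>t. S t k) \<longlongrightarrow> Se k) at_top \<and>
                      ((\<lambda>t. V t k) \<longlongrightarrow> Ve k) at_top \<and>
                      ((\<lambda>t. I t k) \<longlongrightarrow> Ie k) at_top \<and>
                      ((\<lambda>t. Q t k) \<longlongrightarrow> Qe k) at_top \<and>
                      ((\<lambda>t. R t k) \<longlongrightarrow> Rst k) at_top))"
proof -
  have sv: "sviqr n p lam phi mu b d Phi alpha beta gamma eta omega delta Se Ve Ie Qe Rst"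
    unfolding sviqr_def using n_ge p_pos bd d_pos Phi_pos par_pos const_pos delta Eq by auto
  interpret sviqr n p lam phi mu b d Phi alpha beta gamma eta omega delta Se Ve Ie Qe Rst by (rule sv)
  have so: "sol n p lam phi mu b d Phi alpha beta gamma eta omega delta Se Ve Ie Qe Rst S V I Q R"
    if "is_solution n p lam phi mu b d Phi alpha beta gamma eta omega delta S V I Q R"
       "admissible_init n b d Phi (S 0) (V 0) (I 0) (Q 0) (R 0)" for S V I Q R
    unfolding sol_def sol_axioms_def using sv that by auto
  show ?thesis
  proof (intro conjI allI impI)
    fix \<epsilon> :: real assume \<epsilon>: "\<epsilon> > 0"
    obtain \<delta> where \<delta>: "\<delta> > 0" "\<And>s. 0 \<le> s \<Longrightarrow> s < \<delta> \<Longrightarrow> s < emin/2 \<and> s \<le> 1 \<and> Fb s < \<epsilon>"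
      using Fb_small[OF \<epsilon>] by blast
    show "\<exists>\<delta>>0. \<forall>S V I Q R.
        is_solution n p lam phi mu b d Phi alpha beta gamma eta omega delta S V I Q R \<and>
        admissible_init n b d Phi (S 0) (V 0) (I 0) (Q 0) (R 0) \<and>
        sdist n (S 0) (V 0) (I 0) (Q 0) (R 0) Se Ve Ie Qe Rst < \<delta> \<longrightarrow>
        (\<forall>t\<ge>0. sdist n (S t) (V t) (I t) (Q t) (R t) Se Ve Ie Qe Rst < \<epsilon>)"
    proof (rule exI[of _ \<delta>], intro conjI allI impI)
      show "\<delta> > 0" by (rule \<delta>(1))
      fix S V I Q R and t :: real
      assume H: "is_solution n p lam phi mu b d Phi alpha beta gamma eta omega delta S V I Q R \<and>
        admissible_init n b d Phi (S 0) (V 0) (I 0) (Q 0) (R 0) \<and>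
        sdist n (S 0) (V 0) (I 0) (Q 0) (R 0) Se Ve Ie Qe Rst < \<delta>"
        and t: "t \<ge> 0"
      interpret s: sol n p lam phi mu b d Phi alpha beta gamma eta omega delta Se Ve Ie Qe Rst S V I Q R
        using so H by blast
      have "s.s0 < \<delta>" using H by (simp add: s.s0_def)
      hence h: "s.s0 < emin/2" "s.s0 \<le> 1" "Fb s.s0 < \<epsilon>" using \<delta>(2)[OF s.s0_nonneg] by auto
      show "sdist n (S t) (V t) (I t) (Q t) (R t) Se Ve Ie Qe Rst < \<epsilon>"
        using s.stab_bound[OF t h(1) h(2)] h(3) by linarith
    qed
  next
    fix S V I Q R
    assume H: "is_solution n p lam phi mu b d Phi alpha beta gamma eta omega delta S V I Q R \<and>
        admissible_init n b d Phi (S 0) (V 0) (I 0) (Q 0) (R 0)"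
    interpret s: sol n p lam phi mu b d Phi alpha beta gamma eta omega delta Se Ve Ie Qe Rst S V I Q R
      using so H by blast
    show "\<forall>k\<in>{1..n}. ((\<lambda>t. S t k) \<longlongrightarrow> Se k) at_top \<and>
                      ((\<lambda>t. V t k) \<longlongrightarrow> Ve k) at_top \<and>
                      ((\<lambda>t. I t k) \<longlongrightarrow> Ie k) at_top \<and>
                      ((\<lambda>t. Q t k) \<longlongrightarrow> Qe k) at_top \<and>
                      ((\<lambda>t. R t k) \<longlongrightarrow> Rst k) at_top"
      using s.S_conv s.V_conv s.I_conv s.Q_conv s.R_conv by blast
  qed
qed


end
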